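(* The allegories $\mathsf{StoneE}^\mathsf{R}$ and $\mathsf{SubS5^S}$ are equivalent. The equivalence sends an $\mathsf{S5}$-subordination space $(X,E)$ to $(\mathsf{Clop}(X),S_E)$ and a compatible closed relation $R$ to $S_R$, and its quasi-inverse sends an $\mathsf{S5}$-subordination algebra $(B,S)$ to $(\mathsf{Ult}(B),R_S)$ and a compatible subordination $T$ to $R_T$.
   Context: For a closed relation $R$ between Stone spaces, $S_R$ is the relation between clopen algebras given by $U\mathrel{S_R}V\iff R[U]\subseteq V$; for a relation $S$ between boolean algebras, $R_S$ is the relation between ultrafilter spaces given by $x\mathrel{R_S}y\iff S[x]\subseteq y$. A subordination $S\colon A\to B$ between boolean algebras is a relation satisfying: (S1) $0\mathrel{S}0$, $1\mathrel{S}1$; (S2) $a,b\mathrel{S}c\Rightarrow(a\vee b)\mathrel{S}c$; (S3) $a\mathrel{S}c,d\Rightarrow a\mathrel{S}(c\wedge d)$; (S4) $a\le b\mathrel{S}c\le d\Rightarrow a\mathrel{S}d$. An $\mathsf{S5}$-subordination on $B$ is a subordination $S\colon B\to B$ satisfying (S5) $a\mathrel{S}b\Rightarrow a\le b$; (S6) $a\mathrel{S}b\Rightarrow\neg b\mathrel{S}\neg a$; (S7) $a\mathrel{S}b\Rightarrow\exists c\,(a\mathrel{S}c$ and $c\mathrel{S}b)$. $\mathsf{StoneE}^\mathsf{R}$: objects are pairs $(X,E)$ with $X$ a Stone space and $E$ a closed equivalence relation on $X$ ($\mathsf{S5}$-subordination spaces); morphisms $(X,E)\to(X',E')$ are closed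 relations $R\subseteq X\times X'$ with $R\circ E=R=E'\circ R$ (compatible closed relations); identity on $(X,E)$ is $E$; composition is relational composition; hom-sets ordered by inclusion; dagger is converse relation. $\mathsf{SubS5^S}$: objects are pairs $(B,S)$ with $B$ a boolean algebra and $S$ an $\mathsf{S5}$-subordination ($\mathsf{S5}$-subordination algebras); morphisms $(B,S)\to(B',S')$ are subordinations $T\colon B\to B'$ with $T\circ S=T=S'\circ T$ (compatible subordinations); identity on $(B,S)$ is $S$; composition relational; hom-sets ordered by reverse inclusion; dagger $T^\dagger$ given by $b\mathrel{T^\dagger}a$ iff $\neg a\mathrel{T}\neg b$. An allegory is an order-enriched dagger category with binary meets in hom-sets, monotone dagger, and modular law $gf\wedge h\le(g\wedge hf^\dagger)f$; an equivalence of allegories is a functor that is an equivalence of categories, preserves binary meets of morphisms and commutes with daggers. *)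

theory Defs
  imports "HOL-Analysis.Analysis"
begin

definition clopens :: "'a topology \<Rightarrow> 'a set set" where
  "clopens X = {U. openin X U \<and> closedin X U}"

definition zero_dim :: "'a topology \<Rightarrow> bool" where
  "zero_dim X \<longleftrightarrow> (\<forall>W x. openin X W \<and> x \<in> W \<longrightarrow> (\<exists>C \<in> clopens X. x \<in> C \<and> C \<subseteq> W))"

definition Stone_space :: "'a topology \<Rightarrow> bool" where
  "Stone_space X \<longleftrightarrow> compact_space X \<and> Hausdorff_space X \<and> zero_dim X"

record 'b balg =
  bcarrier :: "'b set"
  bzero :: 'b
  bone :: 'b
  bjoin :: "'b \<Rightarrow> 'b \<Rightarrow> 'b"
  bmeet :: "'b \<Rightarrow> 'b \<Rightarrow> 'b"
  bneg :: "'b \<Rightarrow> 'b"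

definition is_balg :: "'b balg \<Rightarrow> bool" where
  "is_balg B \<longleftrightarrow>
     bzero B \<in> bcarrier B \<and> bone B \<in> bcarrier B \<and>
     (\<forall>a\<in>bcarrier B. \<forall>b\<in>bcarrier B. bjoin B a b \<in> bcarrier B \<and> bmeet B a b \<in> bcarrier B) \<and>
     (\<forall>a\<in>bcarrier B. bneg B a \<in> bcarrier B) \<and>
     (\<forall>a\<in>bcarrier B. \<forall>b\<in>bcarrier B.
        bjoin B a b = bjoin B b a \<and> bmeet B a b = bmeet B b a \<and>
        bjoin B a (bmeet B a b) = a \<and> bmeet B a (bjoin B a b) = a) \<and>
     (\<forall>a\<in>bcarrier B. \<forall>b\<in>bcarrier B. \<forall>c\<in>bcarrier B.
        bjoin B (bjoin B a b) c = bjoin B a (bjoin B b c) \<and>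
        bmeet B (bmeet B a b) c = bmeet B a (bmeet B b c) \<and>
        bmeet B a (bjoin B b c) = bjoin B (bmeet B a b) (bmeet B a c) \<and>
        bjoin B a (bmeet B b c) = bmeet B (bjoin B a b) (bjoin B a c)) \<and>
     (\<forall>a\<in>bcarrier B. bjoin B a (bzero B) = a \<and> bmeet B a (bone B) = a \<and>
        bjoin B a (bneg B a) = bone B \<and> bmeet B a (bneg B a) = bzero B)"

definition ble :: "'b balg \<Rightarrow> 'b \<Rightarrow> 'b \<Rightarrow> bool" where
  "ble B a b \<longleftrightarrow> bmeet B a b = a"

definition Clop :: "'a topology \<Rightarrow> 'a set balg" where
  "Clop X = \<lparr> bcarrier = clopens X, bzero = {}, bone = topspace X,
             bjoin = (\<union>), bmeet = (\<inter>), bneg = (\<lambda>U. topspace X - U) \<rparr>"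

definition ultrafilter :: "'b balg \<Rightarrow> 'b set \<Rightarrow> bool" where
  "ultrafilter B u \<longleftrightarrow> u \<subseteq> bcarrier B \<and> bone B \<in> u \<and> bzero B \<notin> u \<and>
     (\<forall>a\<in>u. \<forall>b\<in>u. bmeet B a b \<in> u) \<and>
     (\<forall>a\<in>u. \<forall>b\<in>bcarrier B. ble B a b \<longrightarrow> b \<in> u) \<and>
     (\<forall>a\<in>bcarrier B. a \<in> u \<or> bneg B a \<in> u)"

definition ults :: "'b balg \<Rightarrow> 'b set set" where
  "ults B = {u. ultrafilter B u}"

definition stone_map :: "'b balg \<Rightarrow> 'b \<Rightarrow> 'b set set" where
  "stone_map B a = {u \<in> ults B. a \<in> u}"

definition Ult :: "'b balg \<Rightarrow> 'b set topology" where
  "Ult B = topology_generated_by (stone_map B ` bcarrier B)"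

definition subordination :: "'b balg \<Rightarrow> 'd balg \<Rightarrow> ('b \<times> 'd) set \<Rightarrow> bool" where
  "subordination A B S \<longleftrightarrow>
     S \<subseteq> bcarrier A \<times> bcarrier B \<and>
     (bzero A, bzero B) \<in> S \<and> (bone A, bone B) \<in> S \<and>
     (\<forall>a b c. (a, c) \<in> S \<and> (b, c) \<in> S \<longrightarrow> (bjoin A a b, c) \<in> S) \<and>
     (\<forall>a c d. (a, c) \<in> S \<and> (a, d) \<in> S \<longrightarrow> (a, bmeet B c d) \<in> S) \<and>
     (\<forall>a b c d. a \<in> bcarrier A \<and> d \<in> bcarrier B \<and> ble A a b \<and> (b, c) \<in> S \<and> ble B c d
        \<longrightarrow> (a, d) \<in> S)"

definition S5_subordination :: "'b balg \<Rightarrow> ('b \<times> 'b) set \<Rightarrow> bool" where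
  "S5_subordination B S \<longleftrightarrow> subordination B B S \<and>
     (\<forall>a b. (a, b) \<in> S \<longrightarrow> ble B a b) \<and>
     (\<forall>a b. (a, b) \<in> S \<longrightarrow> (bneg B b, bneg B a) \<in> S) \<and>
     (\<forall>a b. (a, b) \<in> S \<longrightarrow> (\<exists>c. (a, c) \<in> S \<and> (c, b) \<in> S))"

definition S5_space :: "'a topology \<Rightarrow> ('a \<times> 'a) set \<Rightarrow> bool" where
  "S5_space X E \<longleftrightarrow> Stone_space X \<and> E \<subseteq> topspace X \<times> topspace X \<and>
     equiv (topspace X) E \<and> closedin (prod_topology X X) E"

text \<open>Morphisms of StoneE^R (composition R' after R is R O R').\<close>
definition stone_mor :: "'a topology \<Rightarrow> ('a \<times> 'a) set \<Rightarrow> 'c topology \<Rightarrow> ('c \<times> 'c) set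
    \<Rightarrow> ('a \<times> 'c) set \<Rightarrow> bool" where
  "stone_mor X E X' E' R \<longleftrightarrow> R \<subseteq> topspace X \<times> topspace X' \<and>
     closedin (prod_topology X X') R \<and> E O R = R \<and> R O E' = R"

definition stone_iso :: "'a topology \<Rightarrow> ('a \<times> 'a) set \<Rightarrow> 'c topology \<Rightarrow> ('c \<times> 'c) set
    \<Rightarrow> ('a \<times> 'c) set \<Rightarrow> bool" where
  "stone_iso X E X' E' R \<longleftrightarrow> stone_mor X E X' E' R \<and>
     (\<exists>Q. stone_mor X' E' X E Q \<and> R O Q = E \<and> Q O R = E')"

definition S5_subalg :: "'b balg \<Rightarrow> ('b \<times> 'b) set \<Rightarrow> bool" where
  "S5_subalg B S \<longleftrightarrow> is_balg B \<and> S5_subordination B S"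

definition sub_mor :: "'b balg \<Rightarrow> ('b \<times> 'b) set \<Rightarrow> 'd balg \<Rightarrow> ('d \<times> 'd) set
    \<Rightarrow> ('b \<times> 'd) set \<Rightarrow> bool" where
  "sub_mor B S B' S' T \<longleftrightarrow> subordination B B' T \<and> S O T = T \<and> T O S' = T"

definition sub_iso :: "'b balg \<Rightarrow> ('b \<times> 'b) set \<Rightarrow> 'd balg \<Rightarrow> ('d \<times> 'd) set
    \<Rightarrow> ('b \<times> 'd) set \<Rightarrow> bool" where
  "sub_iso B S B' S' T \<longleftrightarrow> sub_mor B S B' S' T \<and>
     (\<exists>Q. sub_mor B' S' B S Q \<and> T O Q = S \<and> Q O T = S')"

definition sub_dagger :: "'b balg \<Rightarrow> 'd balg \<Rightarrow> ('b \<times> 'd) set \<Rightarrow> ('d \<times> 'b) set" where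
  "sub_dagger B B' T = {(b, a). a \<in> bcarrier B \<and> b \<in> bcarrier B' \<and> (bneg B a, bneg B' b) \<in> T}"

text \<open>Binary meet in the hom-set of SubS5^S, ordered by REVERSE inclusion.\<close>
definition sub_is_meet :: "'b balg \<Rightarrow> ('b \<times> 'b) set \<Rightarrow> 'd balg \<Rightarrow> ('d \<times> 'd) set
    \<Rightarrow> ('b \<times> 'd) set \<Rightarrow> ('b \<times> 'd) set \<Rightarrow> ('b \<times> 'd) set \<Rightarrow> bool" where
  "sub_is_meet B S B' S' T1 T2 M \<longleftrightarrow> sub_mor B S B' S' M \<and> T1 \<subseteq> M \<and> T2 \<subseteq> M \<and>
     (\<forall>T. sub_mor B S B' S' T \<and> T1 \<subseteq> T \<and> T2 \<subseteq> T \<longrightarrow> M \<subseteq> T)"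

definition S_of :: "'a topology \<Rightarrow> 'c topology \<Rightarrow> ('a \<times> 'c) set \<Rightarrow> ('a set \<times> 'c set) set" where
  "S_of X X' R = {(U, V). U \<in> clopens X \<and> V \<in> clopens X' \<and> R `` U \<subseteq> V}"

definition R_of :: "'b balg \<Rightarrow> 'd balg \<Rightarrow> ('b \<times> 'd) set \<Rightarrow> ('b set \<times> 'd set) set" where
  "R_of B B' S = {(x, y). x \<in> ults B \<and> y \<in> ults B' \<and> S `` x \<subseteq> y}"

definition eta_iso :: "'a topology \<Rightarrow> ('a \<times> 'a) set \<Rightarrow> ('a \<times> 'a set set) set" where
  "eta_iso X E = {(x, u). x \<in> topspace X \<and> u \<in> ults (Clop X) \<and>
      S_of X X E `` {U \<in> clopens X. x \<in> U} \<subseteq> u}"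

definition eps_iso :: "'b balg \<Rightarrow> ('b \<times> 'b) set \<Rightarrow> ('b \<times> 'b set set) set" where
  "eps_iso B S = {(a, U). a \<in> bcarrier B \<and> U \<in> clopens (Ult B) \<and>
      (\<exists>b. (a, b) \<in> S \<and> stone_map B b \<subseteq> U)}"

end

theory Submission
  imports Defs
begin


lemma clopensI: "openin X U \<Longrightarrow> closedin X U \<Longrightarrow> U \<in> clopens X"
  by (simp add: clopens_def)
lemma clopensD: "U \<in> clopens X \<Longrightarrow> openin X U \<and> closedin X U"
  by (simp add: clopens_def)
lemma clopens_sub: "U \<in> clopens X \<Longrightarrow> U \<subseteq> topspace X"
  by (simp add: clopens_def closedin_subset)
lemma clopens_empty: "{} \<in> clopens X" by (simp add: clopens_def)
lemma clopens_top: "topspace X \<in> clopens X" by (simp add: clopens_def)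
lemma clopens_Un: "U \<in> clopens X \<Longrightarrow> V \<in> clopens X \<Longrightarrow> U \<union> V \<in> clopens X"
  by (simp add: clopens_def openin_Un closedin_Un)
lemma clopens_Int: "U \<in> clopens X \<Longrightarrow> V \<in> clopens X \<Longrightarrow> U \<inter> V \<in> clopens X"
  by (simp add: clopens_def openin_Int closedin_Int)
lemma clopens_Diff: "U \<in> clopens X \<Longrightarrow> topspace X - U \<in> clopens X"
  by (simp add: clopens_def openin_diff closedin_diff)
lemma clopens_Union: "finite F \<Longrightarrow> F \<subseteq> clopens X \<Longrightarrow> \<Union>F \<in> clopens X"
  by (induction rule: finite_induct) (auto intro: clopens_empty clopens_Un)

lemma img_closed:
  assumes "compact_space X" "compact_space Y" "Hausdorff_space Y"
    "closedin (prod_topology X Y) R" "closedin X K"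
  shows "closedin Y (R `` K)"
proof -
  have Rs: "R \<subseteq> topspace X \<times> topspace Y" using closedin_subset[OF assms(4)] by simp
  have eq: "R `` K = snd ` (R \<inter> (K \<times> topspace Y))" using Rs by force
  have "closedin (prod_topology X Y) (R \<inter> (K \<times> topspace Y))"
    using assms by (intro closedin_Int) (auto simp: closedin_prod_Times_iff)
  moreover have "compact_space (prod_topology X Y)"
    using assms by (simp add: compact_space_prod_topology)
  ultimately have "compactin (prod_topology X Y) (R \<inter> (K \<times> topspace Y))"
    by (simp add: closedin_compact_space)
  then have "compactin Y (snd ` (R \<inter> (K \<times> topspace Y)))"
    by (rule image_compactin) (rule continuous_map_snd)
  then have "closedin Y (snd ` (R \<inter> (K \<times> topspace Y)))" by (rule compactin_imp_closedin[OF assms(3)])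
  with eq show ?thesis by simp
qed

lemma pre_closed:
  assumes "compact_space X" "compact_space Y" "Hausdorff_space X"
    "closedin (prod_topology X Y) R" "closedin Y L"
  shows "closedin X (R\<inverse> `` L)"
proof -
  have Rs: "R \<subseteq> topspace X \<times> topspace Y" using closedin_subset[OF assms(4)] by simp
  have eq: "R\<inverse> `` L = fst ` (R \<inter> (topspace X \<times> L))" using Rs by force
  have "closedin (prod_topology X Y) (R \<inter> (topspace X \<times> L))"
    using assms by (intro closedin_Int) (auto simp: closedin_prod_Times_iff)
  moreover have "compact_space (prod_topology X Y)"
    using assms by (simp add: compact_space_prod_topology)
  ultimately have "compactin (prod_topology X Y) (R \<inter> (topspace X \<times> L))"
    by (simp add: closedin_compact_space)
  then have "compactin X (fst ` (R \<inter> (topspace X \<times> L)))"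
    by (rule image_compactin) (rule continuous_map_fst)
  then have "closedin X (fst ` (R \<inter> (topspace X \<times> L)))" by (rule compactin_imp_closedin[OF assms(3)])
  with eq show ?thesis by simp
qed

lemma open_pre:
  assumes "compact_space X" "compact_space Y" "Hausdorff_space X"
    "closedin (prod_topology X Y) R" "openin Y V"
  shows "openin X {x \<in> topspace X. R `` {x} \<subseteq> V}"
proof -
  have Rs: "R \<subseteq> topspace X \<times> topspace Y" using closedin_subset[OF assms(4)] by simp
  have c: "closedin X (R\<inverse> `` (topspace Y - V))"
    using assms by (intro pre_closed) auto
  have "{x \<in> topspace X. R `` {x} \<subseteq> V} = topspace X - R\<inverse> `` (topspace Y - V)"
    using Rs by blast
  then show ?thesis using c by (simp add: closedin_def)
qed

lemma clopen_between:
  assumes "compact_space X" "zero_dim X" "closedin X K" "openin X Op" "K \<subseteq> Op"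
  shows "\<exists>W\<in>clopens X. K \<subseteq> W \<and> W \<subseteq> Op"
proof -
  let ?U = "{C \<in> clopens X. C \<subseteq> Op}"
  have cK: "compactin X K" using assms closedin_compact_space by blast
  have "K \<subseteq> \<Union>?U"
  proof
    fix x assume "x \<in> K"
    then have "x \<in> Op" using assms(5) by blast
    then obtain C where "C \<in> clopens X" "x \<in> C" "C \<subseteq> Op"
      using assms(2)[unfolded zero_dim_def, rule_format, of Op x] assms(4) by blast
    then show "x \<in> \<Union>?U" by blast
  qed
  moreover have "\<forall>U\<in>?U. openin X U" by (auto simp: clopens_def)
  ultimately obtain F where F: "finite F" "F \<subseteq> ?U" "K \<subseteq> \<Union>F"
    using compactinD[OF cK, of ?U] by blast
  have "\<Union>F \<in> clopens X" using F by (intro clopens_Union) auto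
  then show ?thesis using F by blast
qed

lemma K1:
  assumes "compact_space X" "zero_dim X" "Hausdorff_space X" "compact_space Y"
    "closedin (prod_topology X Y) R" "closedin X K" "openin Y V" "R `` K \<subseteq> V"
  shows "\<exists>W\<in>clopens X. K \<subseteq> W \<and> R `` W \<subseteq> V"
proof -
  let ?O = "{x \<in> topspace X. R `` {x} \<subseteq> V}"
  have "openin X ?O" using assms by (intro open_pre) auto
  moreover have "K \<subseteq> ?O" using assms(8) closedin_subset[OF assms(6)] by auto
  ultimately obtain W where "W \<in> clopens X" "K \<subseteq> W" "W \<subseteq> ?O"
    using clopen_between[OF assms(1,2,6), of ?O] by blast
  then show ?thesis by blast
qed

lemma Stone_D: "Stone_space X \<Longrightarrow> compact_space X \<and> Hausdorff_space X \<and> zero_dim X"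
  by (simp add: Stone_space_def)

lemma COMP:
  assumes "Stone_space X" "Stone_space Y" "Stone_space Z"
    "closedin (prod_topology X Y) R" "closedin (prod_topology Y Z) R'"
  shows "S_of X Z (R O R') = S_of X Y R O S_of Y Z R'"
proof
  show "S_of X Y R O S_of Y Z R' \<subseteq> S_of X Z (R O R')"
    unfolding S_of_def by blast
next
  show "S_of X Z (R O R') \<subseteq> S_of X Y R O S_of Y Z R'"
  proof clarify
    fix U V assume uv: "(U, V) \<in> S_of X Z (R O R')"
    then have U: "U \<in> clopens X" and V: "V \<in> clopens Z" and sub: "R' `` (R `` U) \<subseteq> V"
      unfolding S_of_def by auto
    have "closedin Y (R `` U)"
      using assms U by (intro img_closed) (auto simp: Stone_space_def clopens_def)
    then obtain W where W: "W \<in> clopens Y" "R `` U \<subseteq> W" "R' `` W \<subseteq> V"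
      using K1[of Y Z R' "R `` U" V] assms V sub by (auto simp: Stone_space_def clopens_def)
    then show "(U, V) \<in> S_of X Y R O S_of Y Z R'"
      using U V unfolding S_of_def by blast
  qed
qed

definition pt :: "'a topology \<Rightarrow> 'a \<Rightarrow> 'a set set" where
  "pt X y = {U \<in> clopens X. y \<in> U}"

lemma KEY_R:
  assumes "Stone_space X" "Stone_space Y" "closedin (prod_topology X Y) R"
    "x \<in> topspace X" "y \<in> topspace Y"
  shows "S_of X Y R `` pt X x \<subseteq> pt Y y \<longleftrightarrow> (x, y) \<in> R"
proof
  assume xy: "(x, y) \<in> R"
  show "S_of X Y R `` pt X x \<subseteq> pt Y y"
  proof
    fix V assume "V \<in> S_of X Y R `` pt X x"
    then obtain U where U: "(U, V) \<in> S_of X Y R" "U \<in> pt X x" by blast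
    then have "x \<in> U" "R `` U \<subseteq> V" "V \<in> clopens Y" by (auto simp: S_of_def pt_def)
    then have "y \<in> V" using xy by blast
    then show "V \<in> pt Y y" using \<open>V \<in> clopens Y\<close> by (simp add: pt_def)
  qed
next
  assume H: "S_of X Y R `` pt X x \<subseteq> pt Y y"
  have X: "compact_space X" "Hausdorff_space X" "zero_dim X" using Stone_D[OF assms(1)] by auto
  have Y: "compact_space Y" "Hausdorff_space Y" "zero_dim Y" using Stone_D[OF assms(2)] by auto
  show "(x, y) \<in> R"
  proof (rule ccontr)
    assume n: "(x, y) \<notin> R"
    have "t1_space X" using Hausdorff_imp_t1_space X by blast
    then have sx: "closedin X {x}" using assms(4) by (rule closedin_t1_singleton)
    have "t1_space Y" using Hausdorff_imp_t1_space Y by blast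
    then have sy: "closedin Y {y}" using assms(5) by (rule closedin_t1_singleton)
    have c1: "closedin Y (R `` {x})" using img_closed[OF X(1) Y(1) Y(2) assms(3) sx] .
    have c2: "openin Y (topspace Y - {y})" using sy by (simp add: closedin_def)
    have c3: "R `` {x} \<subseteq> topspace Y - {y}" using n closedin_subset[OF assms(3)] by auto
    obtain V where V: "V \<in> clopens Y" "R `` {x} \<subseteq> V" "V \<subseteq> topspace Y - {y}"
      using clopen_between[OF Y(1) Y(3) c1 c2 c3] by blast
    have Vo: "openin Y V" using V(1) clopensD by blast
    obtain W where W: "W \<in> clopens X" "{x} \<subseteq> W" "R `` W \<subseteq> V"
      using K1[OF X(1) X(3) X(2) Y(1) assms(3) sx Vo V(2)] by blast
    have "(W, V) \<in> S_of X Y R" using W V by (simp add: S_of_def)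
    moreover have "W \<in> pt X x" using W by (simp add: pt_def)
    ultimately have "V \<in> pt Y y" using H by blast
    then show False using V by (auto simp: pt_def)
  qed
qed


locale ba =
  fixes B :: "'b balg"
  assumes isb: "is_balg B"
begin

abbreviation "car \<equiv> bcarrier B"
abbreviation "z \<equiv> bzero B"
abbreviation "tt \<equiv> bone B"
abbreviation "j \<equiv> bjoin B"
abbreviation "m \<equiv> bmeet B"
abbreviation "n \<equiv> bneg B"
abbreviation "le \<equiv> ble B"

lemma z_in[simp]: "z \<in> car" using isb unfolding is_balg_def by blast
lemma o_in[simp]: "tt \<in> car" using isb unfolding is_balg_def by blast
lemma j_in[simp]: "a \<in> car \<Longrightarrow> b \<in> car \<Longrightarrow> j a b \<in> car" using isb unfolding is_balg_def by blast
lemma m_in[simp]: "a \<in> car \<Longrightarrow> b \<in> car \<Longrightarrow> m a b \<in> car" using isb unfolding is_balg_def by blast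
lemma n_in[simp]: "a \<in> car \<Longrightarrow> n a \<in> car" using isb unfolding is_balg_def by blast
lemma jc: "a \<in> car \<Longrightarrow> b \<in> car \<Longrightarrow> j a b = j b a" using isb unfolding is_balg_def by blast
lemma mc: "a \<in> car \<Longrightarrow> b \<in> car \<Longrightarrow> m a b = m b a" using isb unfolding is_balg_def by blast
lemma ab1: "a \<in> car \<Longrightarrow> b \<in> car \<Longrightarrow> j a (m a b) = a" using isb unfolding is_balg_def by blast
lemma ab2: "a \<in> car \<Longrightarrow> b \<in> car \<Longrightarrow> m a (j a b) = a" using isb unfolding is_balg_def by blast
lemma ja: "a \<in> car \<Longrightarrow> b \<in> car \<Longrightarrow> c \<in> car \<Longrightarrow> j (j a b) c = j a (j b c)"
  using isb unfolding is_balg_def by blast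
lemma ma: "a \<in> car \<Longrightarrow> b \<in> car \<Longrightarrow> c \<in> car \<Longrightarrow> m (m a b) c = m a (m b c)"
  using isb unfolding is_balg_def by blast
lemma d1: "a \<in> car \<Longrightarrow> b \<in> car \<Longrightarrow> c \<in> car \<Longrightarrow> m a (j b c) = j (m a b) (m a c)"
  using isb unfolding is_balg_def by blast
lemma d2: "a \<in> car \<Longrightarrow> b \<in> car \<Longrightarrow> c \<in> car \<Longrightarrow> j a (m b c) = m (j a b) (j a c)"
  using isb unfolding is_balg_def by blast
lemma jz: "a \<in> car \<Longrightarrow> j a z = a" using isb unfolding is_balg_def by blast
lemma mo: "a \<in> car \<Longrightarrow> m a tt = a" using isb unfolding is_balg_def by blast
lemma jn: "a \<in> car \<Longrightarrow> j a (n a) = tt" using isb unfolding is_balg_def by blast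
lemma mn: "a \<in> car \<Longrightarrow> m a (n a) = z" using isb unfolding is_balg_def by blast

lemma mi: "a \<in> car \<Longrightarrow> m a a = a"
proof -
  assume a: "a \<in> car"
  have 1: "j a (m a a) = a" using ab1 a by simp
  have "m a (j a (m a a)) = a" using ab2 a by simp
  then show ?thesis using 1 by simp
qed
lemma ji: "a \<in> car \<Longrightarrow> j a a = a"
proof -
  assume a: "a \<in> car"
  have 1: "m a (j a a) = a" using ab2 a by simp
  have "j a (m a (j a a)) = a" using ab1 a by simp
  then show ?thesis using 1 by simp
qed
lemma mz: "a \<in> car \<Longrightarrow> m a z = z"
proof -
  assume a: "a \<in> car"
  have "m a z = m a (m a (n a))" using a mn by simp
  also have "\<dots> = m (m a a) (n a)" using a ma by simp
  also have "\<dots> = z" using a mi mn by simp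
  finally show ?thesis .
qed
lemma jo: "a \<in> car \<Longrightarrow> j a tt = tt"
proof -
  assume a: "a \<in> car"
  have "j a tt = j a (j a (n a))" using a jn by simp
  also have "\<dots> = j (j a a) (n a)" using a ja by simp
  also have "\<dots> = tt" using a ji jn by simp
  finally show ?thesis .
qed
lemma zj: "a \<in> car \<Longrightarrow> j z a = a" using jc[of z a] jz[of a] by simp
lemma om: "a \<in> car \<Longrightarrow> m tt a = a" using mc[of tt a] mo[of a] by simp
lemma zm: "a \<in> car \<Longrightarrow> m z a = z" using mc[of z a] mz[of a] by simp
lemma oj: "a \<in> car \<Longrightarrow> j tt a = tt" using jc[of tt a] jo[of a] by simp

lemma le_def': "le a b \<longleftrightarrow> m a b = a" by (simp add: ble_def)
lemma le_refl: "a \<in> car \<Longrightarrow> le a a" by (simp add: ble_def mi)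
lemma le_trans: "a \<in> car \<Longrightarrow> b \<in> car \<Longrightarrow> c \<in> car \<Longrightarrow> le a b \<Longrightarrow> le b c \<Longrightarrow> le a c"
proof -
  assume a: "a \<in> car" and b: "b \<in> car" and c: "c \<in> car" and "le a b" "le b c"
  then have 1: "m a b = a" and 2: "m b c = b" by (simp_all add: ble_def)
  have "m a c = m (m a b) c" using 1 by simp
  also have "\<dots> = m a (m b c)" using ma a b c by simp
  also have "\<dots> = a" using 1 2 by simp
  finally show "le a c" by (simp add: ble_def)
qed
lemma le_antisym: "a \<in> car \<Longrightarrow> b \<in> car \<Longrightarrow> le a b \<Longrightarrow> le b a \<Longrightarrow> a = b"
  unfolding ble_def using mc by force
lemma le_join: "a \<in> car \<Longrightarrow> b \<in> car \<Longrightarrow> le a b \<longleftrightarrow> j a b = b"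
proof -
  assume a: "a \<in> car" and b: "b \<in> car"
  show ?thesis
  proof
    assume "le a b"
    then have 1: "m a b = a" by (simp add: ble_def)
    have "j a b = j b (m b a)" using 1 jc mc a b by simp
    also have "\<dots> = b" using ab1 a b by simp
    finally show "j a b = b" .
  next
    assume 1: "j a b = b"
    have "m a b = m a (j a b)" using 1 by simp
    also have "\<dots> = a" using ab2 a b by simp
    finally show "le a b" by (simp add: ble_def)
  qed
qed
lemma le_z: "a \<in> car \<Longrightarrow> le z a" by (simp add: ble_def zm)
lemma le_o: "a \<in> car \<Longrightarrow> le a tt" by (simp add: ble_def mo)
lemma m_lb1: "a \<in> car \<Longrightarrow> b \<in> car \<Longrightarrow> le (m a b) a"
proof -
  assume a: "a \<in> car" and b: "b \<in> car"
  have "m (m a b) a = m a (m a b)" using mc a b by simp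
  also have "\<dots> = m (m a a) b" using ma a b by simp
  also have "\<dots> = m a b" using mi a by simp
  finally show ?thesis by (simp add: ble_def)
qed
lemma m_lb2: "a \<in> car \<Longrightarrow> b \<in> car \<Longrightarrow> le (m a b) b"
proof -
  assume a: "a \<in> car" and b: "b \<in> car"
  have "m (m a b) b = m a (m b b)" using ma a b by simp
  also have "\<dots> = m a b" using mi b by simp
  finally show ?thesis by (simp add: ble_def)
qed
lemma m_glb: "a \<in> car \<Longrightarrow> b \<in> car \<Longrightarrow> c \<in> car \<Longrightarrow> le c a \<Longrightarrow> le c b \<Longrightarrow> le c (m a b)"
proof -
  assume a: "a \<in> car" and b: "b \<in> car" and c: "c \<in> car" and "le c a" "le c b"
  then have 1: "m c a = c" and 2: "m c b = c" by (simp_all add: ble_def)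
  have "m c (m a b) = m (m c a) b" using ma a b c by simp
  also have "\<dots> = c" using 1 2 by simp
  finally show ?thesis by (simp add: ble_def)
qed
lemma j_ub1: "a \<in> car \<Longrightarrow> b \<in> car \<Longrightarrow> le a (j a b)"
  unfolding ble_def using ab2 by simp
lemma j_ub2: "a \<in> car \<Longrightarrow> b \<in> car \<Longrightarrow> le b (j a b)"
  unfolding ble_def using ab2[of b a] jc[of a b] by simp
lemma j_lub: "a \<in> car \<Longrightarrow> b \<in> car \<Longrightarrow> c \<in> car \<Longrightarrow> le a c \<Longrightarrow> le b c \<Longrightarrow> le (j a b) c"
proof -
  assume a: "a \<in> car" and b: "b \<in> car" and c: "c \<in> car" and "le a c" "le b c"
  then have 1: "j a c = c" and 2: "j b c = c" using le_join by auto
  have "j (j a b) c = j a (j b c)" using ja a b c by simp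
  also have "\<dots> = c" using 1 2 by simp
  finally show ?thesis using le_join a b c by simp
qed
lemma m_mono: "a \<in> car \<Longrightarrow> b \<in> car \<Longrightarrow> a' \<in> car \<Longrightarrow> b' \<in> car \<Longrightarrow> le a a' \<Longrightarrow> le b b' \<Longrightarrow> le (m a b) (m a' b')"
proof -
  assume h: "a \<in> car" "b \<in> car" "a' \<in> car" "b' \<in> car" "le a a'" "le b b'"
  have "le (m a b) a'" using le_trans[OF m_in[OF h(1,2)] h(1) h(3) m_lb1[OF h(1,2)] h(5)] .
  moreover have "le (m a b) b'" using le_trans[OF m_in[OF h(1,2)] h(2) h(4) m_lb2[OF h(1,2)] h(6)] .
  ultimately show ?thesis using m_glb h by simp
qed
lemma j_mono: "a \<in> car \<Longrightarrow> b \<in> car \<Longrightarrow> a' \<in> car \<Longrightarrow> b' \<in> car \<Longrightarrow> le a a' \<Longrightarrow> le b b' \<Longrightarrow> le (j a b) (j a' b')"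
proof -
  assume h: "a \<in> car" "b \<in> car" "a' \<in> car" "b' \<in> car" "le a a'" "le b b'"
  have "le a (j a' b')" using le_trans[OF h(1) h(3) j_in[OF h(3,4)] h(5) j_ub1[OF h(3,4)]] .
  moreover have "le b (j a' b')" using le_trans[OF h(2) h(4) j_in[OF h(3,4)] h(6) j_ub2[OF h(3,4)]] .
  ultimately show ?thesis using j_lub h by simp
qed

lemma compl_unique:
  assumes a: "a \<in> car" and x: "x \<in> car" and 1: "j a x = tt" and 2: "m a x = z"
  shows "x = n a"
proof -
  have "x = m x (j a (n a))" using a x jn mo by simp
  also have "\<dots> = j (m x a) (m x (n a))" using a x d1 by simp
  also have "\<dots> = m x (n a)" using a x 2 mc zj by simp
  finally have e1: "x = m x (n a)" .
  have "n a = m (n a) (j a x)" using a x 1 mo by simp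
  also have "\<dots> = j (m (n a) a) (m (n a) x)" using a x d1 by simp
  also have "\<dots> = m (n a) x" using a x mn mc zj by simp
  finally have e2: "n a = m (n a) x" .
  show ?thesis using e1 e2 mc a x by simp
qed

lemma nn: "a \<in> car \<Longrightarrow> n (n a) = a"
proof -
  assume a: "a \<in> car"
  have "j (n a) a = tt" using jc[of "n a" a] jn[of a] a by simp
  moreover have "m (n a) a = z" using mc[of "n a" a] mn[of a] a by simp
  ultimately have "a = n (n a)" using compl_unique[of "n a" a] a by simp
  then show ?thesis by simp
qed

lemma n_join: assumes a: "a \<in> car" and b: "b \<in> car" shows "n (j a b) = m (n a) (n b)"
proof -
  have 1: "j (j a b) (m (n a) (n b)) = tt"
  proof -
    have "j (j a b) (m (n a) (n b)) = m (j (j a b) (n a)) (j (j a b) (n b))" using a b d2 by simp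
    also have "j (j a b) (n a) = tt"
    proof -
      have "j (j a b) (n a) = j (j b a) (n a)" using jc a b by simp
      also have "\<dots> = j b (j a (n a))" using ja a b by simp
      finally show ?thesis using jn jo a b by simp
    qed
    also have "j (j a b) (n b) = tt"
    proof -
      have "j (j a b) (n b) = j a (j b (n b))" using ja a b by simp
      then show ?thesis using jn jo a b by simp
    qed
    finally show ?thesis using mi by simp
  qed
  have 2: "m (j a b) (m (n a) (n b)) = z"
  proof -
    have "m (j a b) (m (n a) (n b)) = m (m (n a) (n b)) (j a b)"
      using a b mc by simp
    also have "\<dots> = j (m (m (n a) (n b)) a) (m (m (n a) (n b)) b)"
      using a b d1 by simp
    also have "m (m (n a) (n b)) a = z"
    proof -
      have "m (m (n a) (n b)) a = m (m (n b) (n a)) a" using mc a b by simp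
      also have "\<dots> = m (n b) (m (n a) a)" using ma a b by simp
      also have "\<dots> = m (n b) (m a (n a))" using mc a by simp
      finally show ?thesis using mn mz a b by simp
    qed
    also have "m (m (n a) (n b)) b = z"
    proof -
      have "m (m (n a) (n b)) b = m (n a) (m (n b) b)" using ma a b by simp
      also have "\<dots> = m (n a) (m b (n b))" using mc b by simp
      finally show ?thesis using mn mz a b by simp
    qed
    finally show ?thesis using ji by simp
  qed
  show ?thesis using compl_unique[OF j_in[OF a b] _ 1 2] a b by simp
qed

lemma n_meet: assumes a: "a \<in> car" and b: "b \<in> car" shows "n (m a b) = j (n a) (n b)"
proof -
  have "n (j (n a) (n b)) = m a b" using n_join[of "n a" "n b"] a b nn by simp
  then have "n (n (j (n a) (n b))) = n (m a b)" by simp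
  then show ?thesis using nn a b by simp
qed

lemma n_z: "n z = tt"
proof -
  have "j z tt = tt" "m z tt = z" using jo mz zj zm by auto
  then show ?thesis using compl_unique[of z tt] by simp
qed
lemma n_o: "n tt = z" using n_z nn[of z] by simp

lemma le_compl: "a \<in> car \<Longrightarrow> b \<in> car \<Longrightarrow> le a b \<longleftrightarrow> m a (n b) = z"
proof
  assume a: "a \<in> car" and b: "b \<in> car" and "le a b"
  then have "a = m a b" by (simp add: ble_def)
  then have "m a (n b) = m (m a b) (n b)" by simp
  also have "\<dots> = m a (m b (n b))" using a b ma by simp
  finally have "m a (n b) = m a (m b (n b))" .
  then show "m a (n b) = z" using mn mz a b by simp
next
  assume a: "a \<in> car" and b: "b \<in> car" and h: "m a (n b) = z"
  have "a = m a (j b (n b))" using a b jn mo by simp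
  also have "\<dots> = j (m a b) (m a (n b))" using a b d1 by simp
  also have "\<dots> = m a b" using h jz a b by simp
  finally show "le a b" by (simp add: ble_def)
qed

lemma le_neg: "a \<in> car \<Longrightarrow> b \<in> car \<Longrightarrow> le a b \<Longrightarrow> le (n b) (n a)"
proof -
  assume a: "a \<in> car" and b: "b \<in> car" and "le a b"
  then have "m a (n b) = z" using le_compl by simp
  then have "m (n b) (n (n a)) = z" using mc[of a "n b"] nn a b by simp
  then show ?thesis using le_compl a b by simp
qed

lemma le_neg_iff: "a \<in> car \<Longrightarrow> b \<in> car \<Longrightarrow> le (n b) (n a) \<longleftrightarrow> le a b"
  using le_neg[of "n b" "n a"] le_neg[of a b] nn by auto

end


context ba
begin

definition filt :: "'b set \<Rightarrow> bool" where
  "filt F \<longleftrightarrow> F \<subseteq> car \<and> tt \<in> F \<and> (\<forall>a\<in>F. \<forall>b\<in>F. m a b \<in> F) \<and> (\<forall>a\<in>F. \<forall>b\<in>car. le a b \<longrightarrow> b \<in> F)"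

definition idl :: "'b set \<Rightarrow> bool" where
  "idl I \<longleftrightarrow> I \<subseteq> car \<and> z \<in> I \<and> (\<forall>a\<in>I. \<forall>b\<in>I. j a b \<in> I) \<and> (\<forall>a\<in>I. \<forall>b\<in>car. le b a \<longrightarrow> b \<in> I)"

lemma maximal_prime:
  assumes I: "idl I" and M: "filt M" "M \<inter> I = {}"
    and max: "\<And>G. filt G \<Longrightarrow> G \<inter> I = {} \<Longrightarrow> M \<subseteq> G \<Longrightarrow> G = M"
    and a: "a \<in> car"
  shows "a \<in> M \<or> n a \<in> M"
proof (rule ccontr)
  assume na: "\<not> (a \<in> M \<or> n a \<in> M)"
  define G where "G x = {c \<in> car. \<exists>g\<in>M. le (m g x) c}" for x
  have Mc: "M \<subseteq> car" and Mt: "tt \<in> M" and Mm: "\<And>x y. x \<in> M \<Longrightarrow> y \<in> M \<Longrightarrow> m x y \<in> M"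
    and Mu: "\<And>x y. x \<in> M \<Longrightarrow> y \<in> car \<Longrightarrow> le x y \<Longrightarrow> y \<in> M"
    using M unfolding filt_def by auto
  have Ic: "I \<subseteq> car" and Ij: "\<And>x y. x \<in> I \<Longrightarrow> y \<in> I \<Longrightarrow> j x y \<in> I"
    and Id: "\<And>x y. x \<in> I \<Longrightarrow> y \<in> car \<Longrightarrow> le y x \<Longrightarrow> y \<in> I"
    using I unfolding idl_def by auto
  have Gfilt: "filt (G x)" if x: "x \<in> car" for x
    unfolding filt_def
  proof (intro conjI ballI impI)
    show "G x \<subseteq> car" by (auto simp: G_def)
    have "le (m tt x) tt" using le_o x by simp
    then show "tt \<in> G x" unfolding G_def using Mt o_in by blast
    fix c d assume c: "c \<in> G x" and d: "d \<in> G x"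
    then obtain g1 g2 where g: "g1 \<in> M" "g2 \<in> M" "le (m g1 x) c" "le (m g2 x) d" "c \<in> car" "d \<in> car"
      by (auto simp: G_def)
    have g1c: "g1 \<in> car" "g2 \<in> car" using g Mc by auto
    have "le (m (m g1 g2) x) (m g1 x)"
      using m_mono[of "m g1 g2" x g1 x] g1c x m_lb1 le_refl by simp
    then have 1: "le (m (m g1 g2) x) c" using le_trans[OF _ _ g(5) _ g(3)] g1c x by simp
    have "le (m (m g1 g2) x) (m g2 x)"
      using m_mono[of "m g1 g2" x g2 x] g1c x m_lb2 le_refl by simp
    then have 2: "le (m (m g1 g2) x) d" using le_trans[OF _ _ g(6) _ g(4)] g1c x by simp
    have "le (m (m g1 g2) x) (m c d)" using m_glb 1 2 g g1c x by simp
    then show "m c d \<in> G x" unfolding G_def using Mm[OF g(1,2)] g(5,6) by auto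
  next
    fix c d assume c: "c \<in> G x" and d: "d \<in> car" and cd: "le c d"
    then obtain g where g: "g \<in> M" "le (m g x) c" "c \<in> car" by (auto simp: G_def)
    have gc: "g \<in> car" using g Mc by blast
    have "le (m g x) d" using le_trans[OF _ g(3) d g(2) cd] gc x by simp
    then show "d \<in> G x" unfolding G_def using g d by auto
  qed
  have MG: "M \<subseteq> G x" if x: "x \<in> car" for x
  proof
    fix g assume "g \<in> M"
    then show "g \<in> G x" unfolding G_def using m_lb1[of g x] Mc x by blast
  qed
  have xG: "x \<in> G x" if x: "x \<in> car" for x
  proof -
    have "le (m tt x) x" using om[OF x] le_refl[OF x] by simp
    then show ?thesis unfolding G_def using Mt x by blast
  qed
  have ne: "G x \<inter> I \<noteq> {}" if x: "x \<in> car" "x \<notin> M" for x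
  proof
    assume "G x \<inter> I = {}"
    then have "G x = M" using max Gfilt MG x by blast
    then show False using xG x by blast
  qed
  obtain c1 where c1: "c1 \<in> G a" "c1 \<in> I" using ne[of a] a na by blast
  obtain c2 where c2: "c2 \<in> G (n a)" "c2 \<in> I" using ne[of "n a"] n_in[OF a] na by blast
  obtain g1 where g1: "g1 \<in> M" "le (m g1 a) c1" "c1 \<in> car" using c1 by (auto simp: G_def)
  obtain g2 where g2: "g2 \<in> M" "le (m g2 (n a)) c2" "c2 \<in> car" using c2 by (auto simp: G_def)
  define g where "g = m g1 g2"
  have gM: "g \<in> M" using Mm g1 g2 g_def by simp
  have gc: "g \<in> car" "g1 \<in> car" "g2 \<in> car" using gM g1 g2 Mc by auto
  have "le (m g a) (m g1 a)" using m_mono[of g a g1 a] gc a m_lb1 le_refl g_def by simp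
  then have 1: "le (m g a) c1" using le_trans[OF _ _ g1(3) _ g1(2)] gc a by simp
  have "le (m g (n a)) (m g2 (n a))" using m_mono[of g "n a" g2 "n a"] gc a m_lb2 le_refl g_def by simp
  then have 2: "le (m g (n a)) c2" using le_trans[OF _ _ g2(3) _ g2(2)] gc a by simp
  have "g = m g (j a (n a))" using jn mo a gc by simp
  also have "\<dots> = j (m g a) (m g (n a))" using d1 a gc by simp
  finally have "le g (j c1 c2)" using j_mono[OF _ _ _ _ 1 2] gc a g1 g2 by simp
  then have "g \<in> I" using Id[OF Ij[OF c1(2) c2(2)] gc(1)] by blast
  then show False using gM M by blast
qed

lemma uf_exists:
  assumes F: "filt F" and I: "idl I" and FI: "F \<inter> I = {}"
  shows "\<exists>u. ultrafilter B u \<and> F \<subseteq> u \<and> u \<inter> I = {}"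
proof -
  define A where "A = {G. filt G \<and> F \<subseteq> G \<and> G \<inter> I = {}}"
  have FA: "F \<in> A" using F FI by (simp add: A_def)
  have ch: "\<exists>U\<in>A. \<forall>X\<in>C. X \<subseteq> U" if C: "C \<in> chains A" for C
  proof (cases "C = {}")
    case True
    then show ?thesis using FA by blast
  next
    case False
    then obtain G0 where G0: "G0 \<in> C" by blast
    have CA: "\<And>G. G \<in> C \<Longrightarrow> filt G \<and> F \<subseteq> G \<and> G \<inter> I = {}"
      using chainsD2[OF C] unfolding A_def by blast
    have "filt (\<Union>C)"
      unfolding filt_def
    proof (intro conjI ballI impI)
      show "\<Union>C \<subseteq> car"
      proof
        fix x assume "x \<in> \<Union>C"
        then obtain G where "G \<in> C" "x \<in> G" by blast
        then show "x \<in> car" using CA[of G] unfolding filt_def by blast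
      qed
      show "tt \<in> \<Union>C" using CA[OF G0] G0 unfolding filt_def by blast
    next
      fix a b assume a: "a \<in> \<Union>C" and b: "b \<in> \<Union>C"
      then obtain Ga Gb where g: "Ga \<in> C" "Gb \<in> C" "a \<in> Ga" "b \<in> Gb" by blast
      have "Ga \<subseteq> Gb \<or> Gb \<subseteq> Ga" using chainsD[OF C g(1,2)] .
      then obtain H where H: "H \<in> C" "a \<in> H" "b \<in> H" using g by blast
      have "filt H" using CA[OF H(1)] by blast
      then have "m a b \<in> H" using H(2,3) unfolding filt_def by blast
      then show "m a b \<in> \<Union>C" using H(1) by blast
    next
      fix a b assume a: "a \<in> \<Union>C" and b: "b \<in> car" and ab: "le a b"
      then obtain H where H: "H \<in> C" "a \<in> H" by blast
      have "filt H" using CA[OF H(1)] by blast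
      then have "b \<in> H" using H(2) b ab unfolding filt_def by blast
      then show "b \<in> \<Union>C" using H(1) by blast
    qed
    moreover have "F \<subseteq> \<Union>C" using CA[OF G0] G0 by blast
    moreover have "\<Union>C \<inter> I = {}" using CA by blast
    ultimately have "\<Union>C \<in> A" by (simp add: A_def)
    then show ?thesis by blast
  qed
  obtain M where M: "M \<in> A" and max: "\<forall>X\<in>A. M \<subseteq> X \<longrightarrow> X = M"
    using Zorn_Lemma2[of A] ch by blast
  have Mf: "filt M" and FM: "F \<subseteq> M" and MI: "M \<inter> I = {}" using M by (auto simp: A_def)
  have max': "G = M" if "filt G" "G \<inter> I = {}" "M \<subseteq> G" for G
  proof -
    have "G \<in> A" using that FM by (auto simp: A_def)
    then show ?thesis using max that(3) by blast
  qed
  have compl: "a \<in> M \<or> n a \<in> M" if "a \<in> car" for a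
    using maximal_prime[OF I Mf MI max' that] .
  have zI: "z \<in> I" using I by (simp add: idl_def)
  have "ultrafilter B M"
    unfolding ultrafilter_def
  proof (intro conjI ballI impI)
    show "M \<subseteq> car" "tt \<in> M" using Mf by (auto simp: filt_def)
    show "z \<notin> M" using zI MI by blast
    show "m a b \<in> M" if "a \<in> M" "b \<in> M" for a b using Mf that by (simp add: filt_def)
    show "b \<in> M" if "a \<in> M" "b \<in> car" "le a b" for a b using Mf that unfolding filt_def by blast
    show "a \<in> M \<or> n a \<in> M" if "a \<in> car" for a using compl that .
  qed
  then show ?thesis using FM MI by blast
qed

lemma filt_princ: "a \<in> car \<Longrightarrow> filt {c \<in> car. le a c}"
  unfolding filt_def
proof (intro conjI ballI impI)
  assume a: "a \<in> car"
  show "{c \<in> car. le a c} \<subseteq> car" by blast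
  show "tt \<in> {c \<in> car. le a c}" using le_o[OF a] by simp
  show "m x y \<in> {c \<in> car. le a c}" if "x \<in> {c \<in> car. le a c}" "y \<in> {c \<in> car. le a c}" for x y
    using that m_glb[of x y a] a by simp
  show "y \<in> {c \<in> car. le a c}" if "x \<in> {c \<in> car. le a c}" "y \<in> car" "le x y" for x y
    using that le_trans[of a x y] a by simp
qed

lemma idl_princ: "a \<in> car \<Longrightarrow> idl {c \<in> car. le c a}"
  unfolding idl_def
proof (intro conjI ballI impI)
  assume a: "a \<in> car"
  show "{c \<in> car. le c a} \<subseteq> car" by blast
  show "z \<in> {c \<in> car. le c a}" using le_z[OF a] by simp
  show "j x y \<in> {c \<in> car. le c a}" if "x \<in> {c \<in> car. le c a}" "y \<in> {c \<in> car. le c a}" for x y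
    using that j_lub[of x y a] a by simp
  show "y \<in> {c \<in> car. le c a}" if "x \<in> {c \<in> car. le c a}" "y \<in> car" "le y x" for x y
    using that le_trans[of y x a] a by simp
qed

lemma filt_top: "filt {c \<in> car. le tt c}"
  using filt_princ[OF o_in] .

lemma ufD:
  assumes "ultrafilter B u"
  shows "u \<subseteq> car" "tt \<in> u" "z \<notin> u" "\<And>a b. a \<in> u \<Longrightarrow> b \<in> u \<Longrightarrow> m a b \<in> u"
    "\<And>a b. a \<in> u \<Longrightarrow> b \<in> car \<Longrightarrow> le a b \<Longrightarrow> b \<in> u"
    "\<And>a. a \<in> car \<Longrightarrow> a \<in> u \<or> n a \<in> u"
  using assms unfolding ultrafilter_def by blast+

lemma uf_neg:
  assumes u: "ultrafilter B u" and a: "a \<in> car"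
  shows "n a \<in> u \<longleftrightarrow> a \<notin> u"
proof
  assume "n a \<in> u"
  show "a \<notin> u"
  proof
    assume "a \<in> u"
    then have "m a (n a) \<in> u" using ufD(4)[OF u] \<open>n a \<in> u\<close> by blast
    then show False using mn a ufD(3)[OF u] by simp
  qed
next
  assume "a \<notin> u" then show "n a \<in> u" using ufD(6)[OF u a] by blast
qed

lemma uf_meet:
  assumes u: "ultrafilter B u" and a: "a \<in> car" and b: "b \<in> car"
  shows "m a b \<in> u \<longleftrightarrow> a \<in> u \<and> b \<in> u"
proof
  assume h: "m a b \<in> u"
  show "a \<in> u \<and> b \<in> u"
    using ufD(5)[OF u h a m_lb1[OF a b]] ufD(5)[OF u h b m_lb2[OF a b]] by simp
qed (use ufD(4)[OF u] in blast)

lemma uf_join: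
  assumes u: "ultrafilter B u" and a: "a \<in> car" and b: "b \<in> car"
  shows "j a b \<in> u \<longleftrightarrow> a \<in> u \<or> b \<in> u"
proof
  assume h: "j a b \<in> u"
  show "a \<in> u \<or> b \<in> u"
  proof (rule ccontr)
    assume "\<not> (a \<in> u \<or> b \<in> u)"
    then have "n a \<in> u" "n b \<in> u" using uf_neg u a b by auto
    then have "m (n a) (n b) \<in> u" using ufD(4)[OF u] by blast
    then have "n (j a b) \<in> u" using n_join a b by simp
    then show False using h uf_neg u a b by simp
  qed
next
  assume "a \<in> u \<or> b \<in> u"
  then show "j a b \<in> u"
  proof
    assume "a \<in> u" then show ?thesis using ufD(5)[OF u _ _ j_ub1[OF a b]] a b by simp
  next
    assume "b \<in> u" then show ?thesis using ufD(5)[OF u _ _ j_ub2[OF a b]] a b by simp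
  qed
qed

lemma uf_sub_eq:
  assumes u: "ultrafilter B u" and v: "ultrafilter B v" and "u \<subseteq> v"
  shows "u = v"
proof
  show "v \<subseteq> u"
  proof
    fix a assume "a \<in> v"
    then have a: "a \<in> car" using ufD(1)[OF v] by blast
    show "a \<in> u"
    proof (rule ccontr)
      assume "a \<notin> u"
      then have "n a \<in> u" using uf_neg[OF u a] by simp
      then have "n a \<in> v" using \<open>u \<subseteq> v\<close> by blast
      then show False using uf_neg[OF v a] \<open>a \<in> v\<close> by simp
    qed
  qed
qed fact

end


context ba
begin

abbreviation "sm \<equiv> stone_map B"

lemma sm_sub: "sm a \<subseteq> ults B" by (auto simp: stone_map_def)
lemma in_sm: "u \<in> sm a \<longleftrightarrow> ultrafilter B u \<and> a \<in> u" by (simp add: stone_map_def ults_def)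

lemma sm_meet: "a \<in> car \<Longrightarrow> b \<in> car \<Longrightarrow> sm (m a b) = sm a \<inter> sm b"
  using uf_meet by (auto simp: in_sm)
lemma sm_join: "a \<in> car \<Longrightarrow> b \<in> car \<Longrightarrow> sm (j a b) = sm a \<union> sm b"
  using uf_join by (auto simp: in_sm)
lemma sm_neg: "a \<in> car \<Longrightarrow> sm (n a) = ults B - sm a"
  using uf_neg by (auto simp: in_sm ults_def)
lemma sm_z: "sm z = {}" using ufD(3) by (auto simp: in_sm)
lemma sm_o: "sm tt = ults B" using ufD(2) by (auto simp: in_sm ults_def)

lemma sm_le: assumes a: "a \<in> car" and b: "b \<in> car" shows "sm a \<subseteq> sm b \<longleftrightarrow> le a b"
proof
  assume "le a b"
  then show "sm a \<subseteq> sm b" using ufD(5) b by (auto simp: in_sm)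
next
  assume h: "sm a \<subseteq> sm b"
  show "le a b"
  proof (rule ccontr)
    assume nab: "\<not> le a b"
    have "{c \<in> car. le a c} \<inter> {c \<in> car. le c b} = {}"
    proof (rule ccontr)
      assume "{c \<in> car. le a c} \<inter> {c \<in> car. le c b} \<noteq> {}"
      then obtain c where "c \<in> car" "le a c" "le c b" by blast
      then show False using le_trans[OF a _ b] nab by blast
    qed
    then obtain u where u: "ultrafilter B u" "{c \<in> car. le a c} \<subseteq> u" "u \<inter> {c \<in> car. le c b} = {}"
      using uf_exists[OF filt_princ[OF a] idl_princ[OF b]] by blast
    have "a \<in> u" using u(2) a le_refl[OF a] by blast
    moreover have "b \<notin> u" using u(3) b le_refl[OF b] by blast
    ultimately show False using h u(1) by (auto simp: in_sm)
  qed
qed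

lemma sm_inj: "a \<in> car \<Longrightarrow> b \<in> car \<Longrightarrow> sm a = sm b \<Longrightarrow> a = b"
proof -
  assume a: "a \<in> car" and b: "b \<in> car" and e: "sm a = sm b"
  have "le a b" using sm_le[OF a b] e by simp
  moreover have "le b a" using sm_le[OF b a] e by simp
  ultimately show "a = b" using le_antisym[OF a b] by simp
qed

lemma top_ult: "topspace (Ult B) = ults B"
proof -
  have "\<Union>(sm ` car) = ults B"
  proof
    show "\<Union>(sm ` car) \<subseteq> ults B" using sm_sub by blast
    show "ults B \<subseteq> \<Union>(sm ` car)" using sm_o o_in by blast
  qed
  then show ?thesis by (simp add: Ult_def)
qed

lemma open_ult_D:
  assumes "openin (Ult B) W"
  shows "W \<subseteq> ults B \<and> (\<forall>u\<in>W. \<exists>a\<in>car. u \<in> sm a \<and> sm a \<subseteq> W)"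
proof -
  have "generate_topology_on (sm ` car) W"
    using assms by (simp add: Ult_def openin_topology_generated_by_iff)
  then show ?thesis
  proof (induction rule: generate_topology_on.induct)
    case Empty
    then show ?case by simp
  next
    case (Int a b)
    have s: "a \<inter> b \<subseteq> ults B" using Int.IH(1) by blast
    have "\<exists>e\<in>car. u \<in> sm e \<and> sm e \<subseteq> a \<inter> b" if u: "u \<in> a \<inter> b" for u
    proof -
      obtain c where c: "c \<in> car" "u \<in> sm c" "sm c \<subseteq> a"
        using Int.IH(1) u by blast
      obtain d where d: "d \<in> car" "u \<in> sm d" "sm d \<subseteq> b"
        using Int.IH(2) u by blast
      have "sm (m c d) = sm c \<inter> sm d" using sm_meet[OF c(1) d(1)] .
      then have "u \<in> sm (m c d) \<and> sm (m c d) \<subseteq> a \<inter> b" using c d by blast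
      then show ?thesis using m_in[OF c(1) d(1)] by blast
    qed
    then show ?case using s by blast
  next
    case (UN K)
    have s: "\<Union>K \<subseteq> ults B"
    proof
      fix u assume "u \<in> \<Union>K"
      then obtain k where "k \<in> K" "u \<in> k" by blast
      then show "u \<in> ults B" using UN.IH[of k] by blast
    qed
    have "\<exists>e\<in>car. u \<in> sm e \<and> sm e \<subseteq> \<Union>K" if u: "u \<in> \<Union>K" for u
    proof -
      obtain k where k: "k \<in> K" "u \<in> k" using u by blast
      then obtain e where "e \<in> car" "u \<in> sm e" "sm e \<subseteq> k" using UN.IH[of k] by blast
      then show ?thesis using k by blast
    qed
    then show ?case using s by blast
  next
    case (Basis s)
    then obtain a where "a \<in> car" "s = sm a" by blast
    then show ?case using sm_sub by blast
  qed
qed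

lemma sm_open': "a \<in> car \<Longrightarrow> openin (Ult B) (sm a)"
  unfolding Ult_def by (rule topology_generated_by_Basis) blast

lemma open_ult:
  "openin (Ult B) W \<longleftrightarrow> W \<subseteq> ults B \<and> (\<forall>u\<in>W. \<exists>a\<in>car. u \<in> sm a \<and> sm a \<subseteq> W)"
proof
  assume "openin (Ult B) W" then show "W \<subseteq> ults B \<and> (\<forall>u\<in>W. \<exists>a\<in>car. u \<in> sm a \<and> sm a \<subseteq> W)"
    by (rule open_ult_D)
next
  assume h: "W \<subseteq> ults B \<and> (\<forall>u\<in>W. \<exists>a\<in>car. u \<in> sm a \<and> sm a \<subseteq> W)"
  show "openin (Ult B) W"
    unfolding openin_subopen[of _ W]
  proof
    fix u assume "u \<in> W"
    then obtain a where "a \<in> car" "u \<in> sm a" "sm a \<subseteq> W" using h by blast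
    then show "\<exists>T. openin (Ult B) T \<and> u \<in> T \<and> T \<subseteq> W" using sm_open' by blast
  qed
qed

lemma sm_closed: assumes a: "a \<in> car" shows "closedin (Ult B) (sm a)"
  unfolding closedin_def top_ult
  using sm_sub sm_neg[OF a] sm_open'[OF n_in[OF a]] by simp

lemma sm_clopen: "a \<in> car \<Longrightarrow> sm a \<in> clopens (Ult B)"
  using sm_open' sm_closed by (simp add: clopens_def)

lemma ult_compact: "compact_space (Ult B)"
  unfolding compact_space_alt top_ult
proof (intro allI impI)
  fix \<U> assume h: "(\<forall>U\<in>\<U>. openin (Ult B) U) \<and> ults B \<subseteq> \<Union>\<U>"
  define I where "I = {a \<in> car. \<exists>F. finite F \<and> F \<subseteq> \<U> \<and> sm a \<subseteq> \<Union>F}"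
  have I: "idl I"
    unfolding idl_def
  proof (intro conjI ballI impI)
    show "I \<subseteq> car" by (auto simp: I_def)
    show "z \<in> I" unfolding I_def using sm_z by auto
  next
    fix a b assume "a \<in> I" "b \<in> I"
    then obtain F G where a: "a \<in> car" "finite F" "F \<subseteq> \<U>" "sm a \<subseteq> \<Union>F"
      and b: "b \<in> car" "finite G" "G \<subseteq> \<U>" "sm b \<subseteq> \<Union>G" by (auto simp: I_def)
    have "sm (j a b) \<subseteq> \<Union>(F \<union> G)" using sm_join[OF a(1) b(1)] a b by auto
    then show "j a b \<in> I" unfolding I_def using a b by (intro CollectI conjI j_in exI[of _ "F \<union> G"]) auto
  next
    fix a b assume "a \<in> I" "b \<in> car" "le b a"
    then obtain F where a: "a \<in> car" "finite F" "F \<subseteq> \<U>" "sm a \<subseteq> \<Union>F" by (auto simp: I_def)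
    have "sm b \<subseteq> sm a" using sm_le[OF \<open>b \<in> car\<close> a(1)] \<open>le b a\<close> by simp
    then show "b \<in> I" unfolding I_def using a \<open>b \<in> car\<close> by blast
  qed
  show "\<exists>F. finite F \<and> F \<subseteq> \<U> \<and> ults B \<subseteq> \<Union>F"
  proof (cases "tt \<in> I")
    case True
    then show ?thesis unfolding I_def using sm_o by auto
  next
    case False
    have "{c \<in> car. le tt c} \<inter> I = {}"
    proof (rule ccontr)
      assume "{c \<in> car. le tt c} \<inter> I \<noteq> {}"
      then obtain c where "c \<in> car" "le tt c" "c \<in> I" by blast
      then have "c = tt" using le_antisym[OF o_in] le_o by blast
      then show False using False \<open>c \<in> I\<close> by simp
    qed
    then obtain u where u: "ultrafilter B u" "u \<inter> I = {}"
      using uf_exists[OF filt_top I] by blast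
    have "u \<in> ults B" using u by (simp add: ults_def)
    then obtain W where W: "W \<in> \<U>" "u \<in> W" using h by blast
    then have "openin (Ult B) W" using h by blast
    then obtain a where a: "a \<in> car" "u \<in> sm a" "sm a \<subseteq> W" using W open_ult_D by blast
    have "a \<in> I" unfolding I_def using a W by (intro CollectI conjI exI[of _ "{W}"]) auto
    moreover have "a \<in> u" using a by (simp add: in_sm)
    ultimately show ?thesis using u by blast
  qed
qed

lemma ult_Hausdorff: "Hausdorff_space (Ult B)"
  unfolding Hausdorff_space_def top_ult
proof (intro allI impI)
  fix u v assume h: "u \<in> ults B \<and> v \<in> ults B \<and> u \<noteq> v"
  then have u: "ultrafilter B u" and v: "ultrafilter B v" by (auto simp: ults_def)
  have "\<not> u \<subseteq> v" using uf_sub_eq[OF u v] h by blast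
  then obtain a where a: "a \<in> u" "a \<notin> v" by blast
  have ac: "a \<in> car" using a ufD(1)[OF u] by blast
  have "n a \<in> v" using uf_neg[OF v ac] a by simp
  then have "u \<in> sm a" "v \<in> sm (n a)" using a u v by (auto simp: in_sm)
  moreover have "disjnt (sm a) (sm (n a))" using sm_neg[OF ac] by (simp add: disjnt_def)
  ultimately show "\<exists>U V. openin (Ult B) U \<and> openin (Ult B) V \<and> u \<in> U \<and> v \<in> V \<and> disjnt U V"
    using sm_open'[OF ac] sm_open'[OF n_in[OF ac]] by blast
qed

lemma ult_zero_dim: "zero_dim (Ult B)"
  unfolding zero_dim_def
proof (intro allI impI)
  fix W u assume h: "openin (Ult B) W \<and> u \<in> W"
  then obtain a where "a \<in> car" "u \<in> sm a" "sm a \<subseteq> W" using open_ult_D by blast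
  then show "\<exists>C\<in>clopens (Ult B). u \<in> C \<and> C \<subseteq> W" using sm_clopen by blast
qed

lemma ult_Stone: "Stone_space (Ult B)"
  using ult_compact ult_Hausdorff ult_zero_dim by (simp add: Stone_space_def)

lemma fin_union_sm: "finite F \<Longrightarrow> F \<subseteq> sm ` car \<Longrightarrow> \<exists>c\<in>car. \<Union>F = sm c"
proof (induction rule: finite_induct)
  case empty
  then show ?case using sm_z z_in by (metis Union_empty)
next
  case (insert x F)
  then obtain c where c: "c \<in> car" "\<Union>F = sm c" by blast
  obtain a where a: "a \<in> car" "x = sm a" using insert by blast
  have "\<Union>(insert x F) = sm (j a c)" using sm_join[OF a(1) c(1)] a c by simp
  then show ?case using j_in[OF a(1) c(1)] by blast
qed

lemma clopen_char: assumes W: "W \<in> clopens (Ult B)" shows "\<exists>c\<in>car. W = sm c"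
proof -
  have "compactin (Ult B) W" using W ult_compact closedin_compact_space by (auto simp: clopens_def)
  moreover have op: "openin (Ult B) W" using W by (simp add: clopens_def)
  define U where "U = sm ` {a \<in> car. sm a \<subseteq> W}"
  have "W \<subseteq> \<Union>U" using open_ult_D[OF op] unfolding U_def by blast
  moreover have "\<And>V. V \<in> U \<Longrightarrow> openin (Ult B) V" unfolding U_def using sm_open' by blast
  ultimately obtain F where F: "finite F" "F \<subseteq> U" "W \<subseteq> \<Union>F" using compactinD by metis
  have "\<Union>F \<subseteq> W" using F(2) unfolding U_def by blast
  then have "W = \<Union>F" using F(3) by blast
  moreover have "F \<subseteq> sm ` car" using F(2) unfolding U_def by blast
  ultimately show ?thesis using fin_union_sm[OF F(1)] by metis
qed

end


lemma subD:
  assumes "subordination A C S"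
  shows "S \<subseteq> bcarrier A \<times> bcarrier C"
    "(bzero A, bzero C) \<in> S" "(bone A, bone C) \<in> S"
    "\<And>a b c. (a, c) \<in> S \<Longrightarrow> (b, c) \<in> S \<Longrightarrow> (bjoin A a b, c) \<in> S"
    "\<And>a c d. (a, c) \<in> S \<Longrightarrow> (a, d) \<in> S \<Longrightarrow> (a, bmeet C c d) \<in> S"
    "\<And>a b c d. a \<in> bcarrier A \<Longrightarrow> d \<in> bcarrier C \<Longrightarrow> ble A a b \<Longrightarrow> (b, c) \<in> S \<Longrightarrow> ble C c d \<Longrightarrow> (a, d) \<in> S"
  using assms unfolding subordination_def by blast+

lemma closed_gen:
  assumes P: "\<And>a b. (a, b) \<in> T \<Longrightarrow> openin X (P a)"
    and Q: "\<And>a b. (a, b) \<in> T \<Longrightarrow> closedin Y (Q b)"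
  shows "closedin (prod_topology X Y)
           {(p, q). p \<in> topspace X \<and> q \<in> topspace Y \<and> (\<forall>(a, b)\<in>T. p \<in> P a \<longrightarrow> q \<in> Q b)}"
    (is "closedin _ ?R")
proof -
  have "openin (prod_topology X Y) (topspace (prod_topology X Y) - ?R)"
    unfolding openin_subopen[of _ "topspace (prod_topology X Y) - ?R"]
  proof
    fix pq assume h: "pq \<in> topspace (prod_topology X Y) - ?R"
    obtain p q where pq: "pq = (p, q)" by (cases pq)
    have pX: "p \<in> topspace X" and qY: "q \<in> topspace Y" using h pq by auto
    then obtain a b where ab: "(a, b) \<in> T" "p \<in> P a" "q \<notin> Q b" using h pq by auto
    let ?B = "P a \<times> (topspace Y - Q b)"
    have "openin (prod_topology X Y) ?B"
      using P[OF ab(1)] Q[OF ab(1)] by (simp add: openin_prod_Times_iff closedin_def)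
    moreover have "pq \<in> ?B" using pq ab qY by auto
    moreover have "?B \<subseteq> topspace (prod_topology X Y) - ?R"
      using ab(1) openin_subset[OF P[OF ab(1)]] by auto
    ultimately show "\<exists>T. openin (prod_topology X Y) T \<and> pq \<in> T \<and> T \<subseteq> topspace (prod_topology X Y) - ?R"
      by blast
  qed
  moreover have "?R \<subseteq> topspace (prod_topology X Y)" by auto
  ultimately show ?thesis by (simp add: closedin_def)
qed

lemma closed_gen2:
  assumes P: "\<And>a b. (a, b) \<in> T \<Longrightarrow> openin Y (P a)"
    and Q: "\<And>a b. (a, b) \<in> T \<Longrightarrow> closedin X (Q b)"
  shows "closedin (prod_topology X Y)
           {(q, p). q \<in> topspace X \<and> p \<in> topspace Y \<and> (\<forall>(a, b)\<in>T. p \<in> P a \<longrightarrow> q \<in> Q b)}"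
    (is "closedin _ ?R")
proof -
  have "openin (prod_topology X Y) (topspace (prod_topology X Y) - ?R)"
    unfolding openin_subopen[of _ "topspace (prod_topology X Y) - ?R"]
  proof
    fix pq assume h: "pq \<in> topspace (prod_topology X Y) - ?R"
    obtain q p where pq: "pq = (q, p)" by (cases pq)
    have pX: "p \<in> topspace Y" and qY: "q \<in> topspace X" using h pq by auto
    then obtain a b where ab: "(a, b) \<in> T" "p \<in> P a" "q \<notin> Q b" using h pq by auto
    let ?B = "(topspace X - Q b) \<times> P a"
    have "openin (prod_topology X Y) ?B"
      using P[OF ab(1)] Q[OF ab(1)] by (simp add: openin_prod_Times_iff closedin_def)
    moreover have "pq \<in> ?B" using pq ab qY by auto
    moreover have "?B \<subseteq> topspace (prod_topology X Y) - ?R"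
      using ab(1) openin_subset[OF P[OF ab(1)]] by auto
    ultimately show "\<exists>T. openin (prod_topology X Y) T \<and> pq \<in> T \<and> T \<subseteq> topspace (prod_topology X Y) - ?R"
      by blast
  qed
  moreover have "?R \<subseteq> topspace (prod_topology X Y)" by auto
  ultimately show ?thesis by (simp add: closedin_def)
qed

lemma Clop_simps[simp]:
  "bcarrier (Clop X) = clopens X" "bzero (Clop X) = {}" "bone (Clop X) = topspace X"
  "bjoin (Clop X) = (\<union>)" "bmeet (Clop X) = (\<inter>)" "bneg (Clop X) = (\<lambda>U. topspace X - U)"
  by (simp_all add: Clop_def)

lemma ble_Clop[simp]: "ble (Clop X) U V \<longleftrightarrow> U \<subseteq> V"
  by (auto simp: ble_def)

lemma Clop_balg: "is_balg (Clop X)"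
  unfolding is_balg_def Clop_simps
  by (intro conjI ballI; (blast intro: clopens_empty clopens_top clopens_Un clopens_Int clopens_Diff dest: clopens_sub)?)

lemma sub_S_of:
  assumes "R \<subseteq> topspace X \<times> topspace Y"
  shows "subordination (Clop X) (Clop Y) (S_of X Y R)"
  unfolding subordination_def Clop_simps ble_Clop
proof (intro conjI allI impI)
  show "S_of X Y R \<subseteq> clopens X \<times> clopens Y" by (auto simp: S_of_def)
  show "({}, {}) \<in> S_of X Y R" by (simp add: S_of_def clopens_empty)
  show "(topspace X, topspace Y) \<in> S_of X Y R" using assms by (auto simp: S_of_def clopens_top)
next
  fix a b c assume "(a, c) \<in> S_of X Y R \<and> (b, c) \<in> S_of X Y R"
  then show "(a \<union> b, c) \<in> S_of X Y R" unfolding S_of_def using clopens_Un by blast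
next
  fix a c d assume "(a, c) \<in> S_of X Y R \<and> (a, d) \<in> S_of X Y R"
  then show "(a, c \<inter> d) \<in> S_of X Y R" unfolding S_of_def using clopens_Int by blast
next
  fix a b c d assume "a \<in> clopens X \<and> d \<in> clopens Y \<and> a \<subseteq> b \<and> (b, c) \<in> S_of X Y R \<and> c \<subseteq> d"
  then show "(a, d) \<in> S_of X Y R" unfolding S_of_def by blast
qed

lemma pt_ult:
  assumes y: "y \<in> topspace X" shows "ultrafilter (Clop X) (pt X y)"
  unfolding ultrafilter_def Clop_simps ble_Clop
proof (intro conjI ballI impI)
  show "pt X y \<subseteq> clopens X" by (auto simp: pt_def)
  show "topspace X \<in> pt X y" using y clopens_top by (simp add: pt_def)
  show "{} \<notin> pt X y" by (simp add: pt_def)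
  show "a \<inter> b \<in> pt X y" if "a \<in> pt X y" "b \<in> pt X y" for a b
    using that clopens_Int[of a X b] by (simp add: pt_def)
  show "b \<in> pt X y" if "a \<in> pt X y" "b \<in> clopens X" "a \<subseteq> b" for a b
    using that by (auto simp: pt_def)
  show "a \<in> pt X y \<or> topspace X - a \<in> pt X y" if "a \<in> clopens X" for a
    using that y clopens_Diff by (auto simp: pt_def)
qed

lemma pt_ults: "y \<in> topspace X \<Longrightarrow> pt X y \<in> ults (Clop X)"
  using pt_ult by (simp add: ults_def)

lemma uf_Clop_Inter:
  assumes u: "ultrafilter (Clop X) u" and F: "finite F" "F \<noteq> {}" "F \<subseteq> u"
  shows "\<Inter>F \<in> u"
  using F
proof (induction rule: finite_ne_induct)
  case (singleton x)
  then show ?case by simp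
next
  case (insert x F)
  then have "x \<in> u" "\<Inter>F \<in> u" by auto
  then show ?case using u unfolding ultrafilter_def by simp
qed

lemma pt_surj:
  assumes X: "compact_space X" and u: "ultrafilter (Clop X) u"
  shows "\<exists>y\<in>topspace X. u = pt X y"
proof -
  have uc: "u \<subseteq> clopens X" and top: "topspace X \<in> u" and emp: "{} \<notin> u"
    and cmp: "\<And>U. U \<in> clopens X \<Longrightarrow> U \<in> u \<or> topspace X - U \<in> u"
    using u unfolding ultrafilter_def by auto
  have "\<Inter>u \<noteq> {}"
  proof -
    have "\<forall>C\<in>u. closedin X C" using uc by (auto simp: clopens_def)
    moreover have "\<Inter>F \<noteq> {}" if "finite F" "F \<subseteq> u" for F
    proof (cases "F = {}")
      case True then show ?thesis by simp
    next
      case False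
      then have "\<Inter>F \<in> u" using uf_Clop_Inter[OF u that(1) _ that(2)] by simp
      then show ?thesis using emp by force
    qed
    then have "\<forall>F. finite F \<and> F \<subseteq> u \<longrightarrow> \<Inter>F \<noteq> {}" by blast
    moreover have fip: "(\<forall>C\<in>u. closedin X C) \<and> (\<forall>F. finite F \<and> F \<subseteq> u \<longrightarrow> \<Inter>F \<noteq> {}) \<longrightarrow> \<Inter>u \<noteq> {}"
      using X unfolding compact_space_fip by (rule spec)
    ultimately show ?thesis by blast
  qed
  then obtain y where y: "y \<in> \<Inter>u" by blast
  have yX: "y \<in> topspace X" using y top by blast
  have "u = pt X y"
  proof
    show "u \<subseteq> pt X y" using y uc by (auto simp: pt_def)
    show "pt X y \<subseteq> u"
    proof
      fix U assume "U \<in> pt X y"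
      then have U: "U \<in> clopens X" "y \<in> U" by (auto simp: pt_def)
      show "U \<in> u"
      proof (rule ccontr)
        assume "U \<notin> u"
        then have "topspace X - U \<in> u" using cmp U by blast
        then show False using y U by blast
      qed
    qed
  qed
  then show ?thesis using yX by blast
qed

lemma ults_Clop: "compact_space X \<Longrightarrow> u \<in> ults (Clop X) \<longleftrightarrow> (\<exists>y\<in>topspace X. u = pt X y)"
  using pt_surj pt_ults by (auto simp: ults_def)


lemma TX_filt:
  assumes B: "is_balg B" and B': "is_balg B'" and T: "subordination B B' T" and x: "ultrafilter B x"
  shows "ba.filt B' (T `` x)"
proof -
  interpret b1: ba B by (rule ba.intro[OF B])
  interpret b2: ba B' by (rule ba.intro[OF B'])
  note TT = subD[OF T]
  note xx = b1.ufD[OF x]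
  show ?thesis unfolding b2.filt_def
  proof (intro conjI ballI impI)
    show "T `` x \<subseteq> bcarrier B'" using TT(1) by blast
    show "bone B' \<in> T `` x" using TT(3) xx(2) by blast
  next
    fix c1 c2 assume "c1 \<in> T `` x" "c2 \<in> T `` x"
    then obtain a1 a2 where a: "(a1, c1) \<in> T" "(a2, c2) \<in> T" "a1 \<in> x" "a2 \<in> x" by blast
    have ac: "a1 \<in> bcarrier B" "a2 \<in> bcarrier B" "c1 \<in> bcarrier B'" "c2 \<in> bcarrier B'"
      using a TT(1) by auto
    define e where "e = bmeet B a1 a2"
    have ec: "e \<in> bcarrier B" using ac e_def by simp
    have "(e, c1) \<in> T" using TT(6)[OF ec ac(3) _ a(1) b2.le_refl[OF ac(3)]] b1.m_lb1[OF ac(1,2)] e_def by simp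
    moreover have "(e, c2) \<in> T" using TT(6)[OF ec ac(4) _ a(2) b2.le_refl[OF ac(4)]] b1.m_lb2[OF ac(1,2)] e_def by simp
    ultimately have "(e, bmeet B' c1 c2) \<in> T" using TT(5) by blast
    moreover have "e \<in> x" using xx(4)[OF a(3,4)] e_def by simp
    ultimately show "bmeet B' c1 c2 \<in> T `` x" by blast
  next
    fix c d assume "c \<in> T `` x" "d \<in> bcarrier B'" "ble B' c d"
    then obtain a where a: "(a, c) \<in> T" "a \<in> x" by blast
    have ac: "a \<in> bcarrier B" using a TT(1) by auto
    have "(a, d) \<in> T" using TT(6)[OF ac \<open>d \<in> bcarrier B'\<close> b1.le_refl[OF ac] a(1) \<open>ble B' c d\<close>] .
    then show "d \<in> T `` x" using a(2) by blast
  qed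
qed

lemma R_of_alt:
  assumes B: "is_balg B" and B': "is_balg B'" and T: "T \<subseteq> bcarrier B \<times> bcarrier B'"
  shows "R_of B B' T = {(p, q). p \<in> topspace (Ult B) \<and> q \<in> topspace (Ult B') \<and>
            (\<forall>(a, b)\<in>T. p \<in> stone_map B a \<longrightarrow> q \<in> stone_map B' b)}"
proof -
  interpret b1: ba B by (rule ba.intro[OF B])
  interpret b2: ba B' by (rule ba.intro[OF B'])
  show ?thesis
    unfolding R_of_def b1.top_ult b2.top_ult
    by (auto simp: b1.in_sm b2.in_sm ults_def)
qed

lemma R_closed:
  assumes B: "is_balg B" and B': "is_balg B'" and T: "T \<subseteq> bcarrier B \<times> bcarrier B'"
  shows "closedin (prod_topology (Ult B) (Ult B')) (R_of B B' T)"
proof -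
  interpret b1: ba B by (rule ba.intro[OF B])
  interpret b2: ba B' by (rule ba.intro[OF B'])
  show ?thesis
    unfolding R_of_alt[OF B B' T]
    by (rule closed_gen) (use T b1.sm_open' b2.sm_closed in blast)+
qed

lemma R_sub:
  assumes B: "is_balg B" and B': "is_balg B'"
  shows "R_of B B' T \<subseteq> topspace (Ult B) \<times> topspace (Ult B')"
proof -
  interpret b1: ba B by (rule ba.intro[OF B])
  interpret b2: ba B' by (rule ba.intro[OF B'])
  show ?thesis unfolding b1.top_ult b2.top_ult by (auto simp: R_of_def)
qed

lemma R_comp:
  assumes B: "is_balg B" and B': "is_balg B'" and B'': "is_balg B''"
    and T: "subordination B B' T" and T': "subordination B' B'' T'"
  shows "R_of B B'' (T O T') = R_of B B' T O R_of B' B'' T'"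
proof
  show "R_of B B' T O R_of B' B'' T' \<subseteq> R_of B B'' (T O T')"
    unfolding R_of_def by blast
next
  interpret b1: ba B by (rule ba.intro[OF B])
  interpret b2: ba B' by (rule ba.intro[OF B'])
  interpret b3: ba B'' by (rule ba.intro[OF B''])
  note TT = subD[OF T] and TT' = subD[OF T']
  show "R_of B B'' (T O T') \<subseteq> R_of B B' T O R_of B' B'' T'"
  proof clarify
    fix x zz assume h: "(x, zz) \<in> R_of B B'' (T O T')"
    then have x: "ultrafilter B x" and zz: "ultrafilter B'' zz" and sub: "(T O T') `` x \<subseteq> zz"
      by (auto simp: R_of_def ults_def)
    note zu = b3.ufD[OF zz]
    define I where "I = {b \<in> bcarrier B'. \<exists>c \<in> bcarrier B''. c \<notin> zz \<and> (b, c) \<in> T'}"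
    have I: "b2.idl I"
      unfolding b2.idl_def
    proof (intro conjI ballI impI)
      show "I \<subseteq> bcarrier B'" by (auto simp: I_def)
      show "bzero B' \<in> I" unfolding I_def using TT'(2) zu(3) by auto
    next
      fix b1 b2 assume "b1 \<in> I" "b2 \<in> I"
      then obtain c1 c2 where c: "b1 \<in> bcarrier B'" "b2 \<in> bcarrier B'" "c1 \<in> bcarrier B''" "c2 \<in> bcarrier B''"
        "c1 \<notin> zz" "c2 \<notin> zz" "(b1, c1) \<in> T'" "(b2, c2) \<in> T'" by (auto simp: I_def)
      define c where "c = bjoin B'' c1 c2"
      have cc: "c \<in> bcarrier B''" using c c_def by simp
      have "c \<notin> zz" using b3.uf_join[OF zz c(3,4)] c c_def by simp
      have 1: "(b1, c) \<in> T'" using TT'(6)[OF c(1) cc b2.le_refl[OF c(1)] c(7)] b3.j_ub1[OF c(3,4)] c_def by simp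
      have 2: "(b2, c) \<in> T'" using TT'(6)[OF c(2) cc b2.le_refl[OF c(2)] c(8)] b3.j_ub2[OF c(3,4)] c_def by simp
      have "(bjoin B' b1 b2, c) \<in> T'" using TT'(4)[OF 1 2] .
      then show "bjoin B' b1 b2 \<in> I" unfolding I_def using c cc \<open>c \<notin> zz\<close> by auto
    next
      fix a b assume "a \<in> I" "b \<in> bcarrier B'" "ble B' b a"
      then obtain c where c: "a \<in> bcarrier B'" "c \<in> bcarrier B''" "c \<notin> zz" "(a, c) \<in> T'" by (auto simp: I_def)
      have "(b, c) \<in> T'" using TT'(6)[OF \<open>b \<in> bcarrier B'\<close> c(2) \<open>ble B' b a\<close> c(4) b3.le_refl[OF c(2)]] .
      then show "b \<in> I" unfolding I_def using c \<open>b \<in> bcarrier B'\<close> by auto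
    qed
    have disj: "T `` x \<inter> I = {}"
    proof (rule ccontr)
      assume "T `` x \<inter> I \<noteq> {}"
      then obtain b a c where "(a, b) \<in> T" "a \<in> x" "c \<notin> zz" "(b, c) \<in> T'" by (auto simp: I_def)
      then show False using sub by blast
    qed
    obtain y where y: "ultrafilter B' y" "T `` x \<subseteq> y" "y \<inter> I = {}"
      using b2.uf_exists[OF TX_filt[OF B B' T x] I disj] by blast
    have "T' `` y \<subseteq> zz"
    proof
      fix c assume "c \<in> T' `` y"
      then obtain b where b: "b \<in> y" "(b, c) \<in> T'" by blast
      have "b \<in> bcarrier B'" "c \<in> bcarrier B''" using b TT'(1) by auto
      then show "c \<in> zz" using b y(3) unfolding I_def by blast
    qed
    then have "(x, y) \<in> R_of B B' T" "(y, zz) \<in> R_of B' B'' T'"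
      using x y zz by (auto simp: R_of_def ults_def)
    then show "(x, zz) \<in> R_of B B' T O R_of B' B'' T'" by blast
  qed
qed

lemma KEY_T:
  assumes B: "is_balg B" and B': "is_balg B'" and T: "subordination B B' T"
    and a: "a \<in> bcarrier B" and b: "b \<in> bcarrier B'"
  shows "(stone_map B a, stone_map B' b) \<in> S_of (Ult B) (Ult B') (R_of B B' T) \<longleftrightarrow> (a, b) \<in> T"
proof -
  interpret b1: ba B by (rule ba.intro[OF B])
  interpret b2: ba B' by (rule ba.intro[OF B'])
  note TT = subD[OF T]
  have cl: "stone_map B a \<in> clopens (Ult B)" "stone_map B' b \<in> clopens (Ult B')"
    using b1.sm_clopen[OF a] b2.sm_clopen[OF b] by auto
  have "R_of B B' T `` stone_map B a \<subseteq> stone_map B' b \<longleftrightarrow> (a, b) \<in> T"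
  proof
    assume ab: "(a, b) \<in> T"
    show "R_of B B' T `` stone_map B a \<subseteq> stone_map B' b"
    proof
      fix y assume "y \<in> R_of B B' T `` stone_map B a"
      then obtain x where xy: "(x, y) \<in> R_of B B' T" "x \<in> stone_map B a" by blast
      then have "ultrafilter B' y" "T `` x \<subseteq> y" "a \<in> x"
        by (auto simp: R_of_def b1.in_sm ults_def)
      then show "y \<in> stone_map B' b" using ab by (auto simp: b2.in_sm)
    qed
  next
    assume h: "R_of B B' T `` stone_map B a \<subseteq> stone_map B' b"
    show "(a, b) \<in> T"
    proof (rule ccontr)
      assume nab: "(a, b) \<notin> T"
      define I where "I = {c \<in> bcarrier B. (c, b) \<in> T}"
      have I: "b1.idl I"
        unfolding b1.idl_def
      proof (intro conjI ballI impI)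
        show "I \<subseteq> bcarrier B" by (auto simp: I_def)
        show "bzero B \<in> I" unfolding I_def
          using TT(6)[OF b1.z_in b b1.le_refl[OF b1.z_in] TT(2) b2.le_z[OF b]] by simp
      next
        fix c d assume "c \<in> I" "d \<in> I"
        then show "bjoin B c d \<in> I" using TT(4) by (auto simp: I_def)
      next
        fix c d assume "c \<in> I" "d \<in> bcarrier B" "ble B d c"
        then show "d \<in> I" using TT(6)[OF _ b, of d c b] b2.le_refl[OF b] by (auto simp: I_def)
      qed
      have disj: "{c \<in> bcarrier B. ble B a c} \<inter> I = {}"
      proof (rule ccontr)
        assume "{c \<in> bcarrier B. ble B a c} \<inter> I \<noteq> {}"
        then obtain c where "ble B a c" "(c, b) \<in> T" by (auto simp: I_def)
        then have "(a, b) \<in> T" using TT(6)[OF a b _ _ b2.le_refl[OF b]] by blast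
        then show False using nab by simp
      qed
      obtain x where x: "ultrafilter B x" "{c \<in> bcarrier B. ble B a c} \<subseteq> x" "x \<inter> I = {}"
        using b1.uf_exists[OF b1.filt_princ[OF a] I disj] by blast
      have ax: "a \<in> x" using x(2) a b1.le_refl[OF a] by blast
      have bn: "b \<notin> T `` x"
      proof
        assume "b \<in> T `` x"
        then obtain c where "c \<in> x" "(c, b) \<in> T" by blast
        then show False using x(3) TT(1) unfolding I_def by blast
      qed
      have disj2: "T `` x \<inter> {c \<in> bcarrier B'. ble B' c b} = {}"
      proof (rule ccontr)
        assume "T `` x \<inter> {c \<in> bcarrier B'. ble B' c b} \<noteq> {}"
        then obtain c where "c \<in> T `` x" "ble B' c b" by blast
        then have "b \<in> T `` x" using TX_filt[OF B B' T x(1)] b unfolding b2.filt_def by blast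
        then show False using bn by simp
      qed
      obtain y where y: "ultrafilter B' y" "T `` x \<subseteq> y" "y \<inter> {c \<in> bcarrier B'. ble B' c b} = {}"
        using b2.uf_exists[OF TX_filt[OF B B' T x(1)] b2.idl_princ[OF b] disj2] by blast
      have "b \<notin> y" using y(3) b b2.le_refl[OF b] by blast
      moreover have "y \<in> R_of B B' T `` stone_map B a"
        using x(1) y ax by (auto simp: R_of_def b1.in_sm ults_def)
      ultimately show False using h by (auto simp: b2.in_sm)
    qed
  qed
  then show ?thesis using cl by (simp add: S_of_def)
qed

lemma R_equiv:
  assumes S: "S5_subalg B S"
  shows "equiv (ults B) (R_of B B S)"
proof -
  have B: "is_balg B" and S5: "S5_subordination B S" using S by (auto simp: S5_subalg_def)
  interpret b1: ba B by (rule ba.intro[OF B])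
  have Ss: "subordination B B S" and S5a: "\<And>a b. (a, b) \<in> S \<Longrightarrow> ble B a b"
    and S6: "\<And>a b. (a, b) \<in> S \<Longrightarrow> (bneg B b, bneg B a) \<in> S"
    and S7: "\<And>a b. (a, b) \<in> S \<Longrightarrow> \<exists>c. (a, c) \<in> S \<and> (c, b) \<in> S"
    using S5 unfolding S5_subordination_def by blast+
  note SS = subD[OF Ss]
  show ?thesis
  proof (rule equivI)
    show "R_of B B S \<subseteq> ults B \<times> ults B" by (auto simp: R_of_def)
    show "refl_on (ults B) (R_of B B S)"
    proof (rule refl_onI)
      fix x assume x: "x \<in> ults B"
      then have xu: "ultrafilter B x" by (simp add: ults_def)
      have "S `` x \<subseteq> x"
      proof
        fix b assume "b \<in> S `` x"
        then obtain a where "a \<in> x" "(a, b) \<in> S" by blast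
        then show "b \<in> x" using b1.ufD(5)[OF xu] S5a SS(1) by blast
      qed
      then show "(x, x) \<in> R_of B B S" using x by (simp add: R_of_def)
    qed
    show "sym (R_of B B S)"
    proof (rule symI)
      fix x y assume "(x, y) \<in> R_of B B S"
      then have x: "ultrafilter B x" and y: "ultrafilter B y" and sub: "S `` x \<subseteq> y"
        by (auto simp: R_of_def ults_def)
      have "S `` y \<subseteq> x"
      proof
        fix c assume "c \<in> S `` y"
        then obtain b where b: "b \<in> y" "(b, c) \<in> S" by blast
        have bc: "b \<in> bcarrier B" "c \<in> bcarrier B" using b SS(1) by auto
        show "c \<in> x"
        proof (rule ccontr)
          assume "c \<notin> x"
          then have "bneg B c \<in> x" using b1.uf_neg[OF x bc(2)] by simp
          moreover have "(bneg B c, bneg B b) \<in> S" using S6[OF b(2)] .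
          ultimately have "bneg B b \<in> y" using sub by blast
          then show False using b1.uf_neg[OF y bc(1)] b(1) by simp
        qed
      qed
      then show "(y, x) \<in> R_of B B S" using x y by (simp add: R_of_def ults_def)
    qed
    show "trans (R_of B B S)"
    proof (rule transI)
      fix x y w assume "(x, y) \<in> R_of B B S" "(y, w) \<in> R_of B B S"
      then have x: "x \<in> ults B" and w: "w \<in> ults B" and s1: "S `` x \<subseteq> y" and s2: "S `` y \<subseteq> w"
        by (auto simp: R_of_def)
      have "S `` x \<subseteq> w"
      proof
        fix c assume "c \<in> S `` x"
        then obtain a where a: "a \<in> x" "(a, c) \<in> S" by blast
        then obtain d where "(a, d) \<in> S" "(d, c) \<in> S" using S7 by blast
        then show "c \<in> w" using a s1 s2 by blast
      qed
      then show "(x, w) \<in> R_of B B S" using x w by (simp add: R_of_def)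
    qed
  qed
qed


lemma S5_spaceD:
  assumes "S5_space X E"
  shows "Stone_space X" "E \<subseteq> topspace X \<times> topspace X" "closedin (prod_topology X X) E"
    "\<And>x. x \<in> topspace X \<Longrightarrow> (x, x) \<in> E" "\<And>x y. (x, y) \<in> E \<Longrightarrow> (y, x) \<in> E"
    "\<And>x y z. (x, y) \<in> E \<Longrightarrow> (y, z) \<in> E \<Longrightarrow> (x, z) \<in> E"
  using assms unfolding S5_space_def equiv_def
  by (auto dest: refl_onD symD transD)

lemma EE:
  assumes "S5_space X E" shows "E O E = E"
proof
  show "E O E \<subseteq> E" using S5_spaceD(6)[OF assms] by blast
  show "E \<subseteq> E O E"
  proof clarify
    fix x y assume "(x, y) \<in> E"
    moreover have "(x, x) \<in> E" using S5_spaceD(2,4)[OF assms] calculation by blast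
    ultimately show "(x, y) \<in> E O E" by blast
  qed
qed

lemma stone_morD:
  assumes "stone_mor X E X' E' R"
  shows "R \<subseteq> topspace X \<times> topspace X'" "closedin (prod_topology X X') R" "E O R = R" "R O E' = R"
  using assms unfolding stone_mor_def by auto

lemma C1:
  assumes XE: "S5_space X E"
  shows "S5_subalg (Clop X) (S_of X X E)"
proof -
  note D = S5_spaceD[OF XE]
  have sub: "subordination (Clop X) (Clop X) (S_of X X E)" using sub_S_of[OF D(2)] .
  have s5: "ble (Clop X) U V" if "(U, V) \<in> S_of X X E" for U V
  proof -
    have U: "U \<in> clopens X" "E `` U \<subseteq> V" using that by (auto simp: S_of_def)
    have "U \<subseteq> E `` U" using clopens_sub[OF U(1)] D(4) by blast
    then show ?thesis using U by simp
  qed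
  have s6: "(bneg (Clop X) V, bneg (Clop X) U) \<in> S_of X X E" if "(U, V) \<in> S_of X X E" for U V
  proof -
    have U: "U \<in> clopens X" "V \<in> clopens X" "E `` U \<subseteq> V" using that by (auto simp: S_of_def)
    have "E `` (topspace X - V) \<subseteq> topspace X - U"
    proof
      fix y assume "y \<in> E `` (topspace X - V)"
      then obtain x where x: "x \<in> topspace X - V" "(x, y) \<in> E" by blast
      have "y \<in> topspace X" using x(2) D(2) by blast
      moreover have "y \<notin> U"
      proof
        assume "y \<in> U"
        then have "x \<in> E `` U" using D(5)[OF x(2)] by blast
        then show False using U(3) x(1) by blast
      qed
      ultimately show "y \<in> topspace X - U" by blast
    qed
    then show ?thesis using U clopens_Diff[OF U(1)] clopens_Diff[OF U(2)] by (simp add: S_of_def)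
  qed
  have s7: "\<exists>W. (U, W) \<in> S_of X X E \<and> (W, V) \<in> S_of X X E" if "(U, V) \<in> S_of X X E" for U V
  proof -
    have "S_of X X E = S_of X X E O S_of X X E"
      using COMP[OF D(1) D(1) D(1) D(3) D(3)] EE[OF XE] by simp
    then show ?thesis using that by blast
  qed
  show ?thesis
    unfolding S5_subalg_def S5_subordination_def
    using Clop_balg sub s5 s6 s7 by blast
qed

lemma C2:
  assumes XE: "S5_space X E" and XE': "S5_space X' E'" and R: "stone_mor X E X' E' R"
  shows "sub_mor (Clop X) (S_of X X E) (Clop X') (S_of X' X' E') (S_of X X' R)"
proof -
  note D = S5_spaceD[OF XE] and D' = S5_spaceD[OF XE'] and RR = stone_morD[OF R]
  have "S_of X X E O S_of X X' R = S_of X X' (E O R)"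
    using COMP[OF D(1) D(1) D'(1) D(3) RR(2)] by simp
  moreover have "S_of X X' R O S_of X' X' E' = S_of X X' (R O E')"
    using COMP[OF D(1) D'(1) D'(1) RR(2) D'(3)] by simp
  ultimately show ?thesis
    unfolding sub_mor_def using sub_S_of[OF RR(1)] RR(3,4) by simp
qed

lemma C3:
  assumes XE: "S5_space X E" and XE': "S5_space X' E'" and XE'': "S5_space X'' E''"
    and R: "stone_mor X E X' E' R" and R': "stone_mor X' E' X'' E'' R'"
  shows "S_of X X'' (R O R') = S_of X X' R O S_of X' X'' R'"
  using COMP[OF S5_spaceD(1)[OF XE] S5_spaceD(1)[OF XE'] S5_spaceD(1)[OF XE'']
      stone_morD(2)[OF R] stone_morD(2)[OF R']] .

lemma fin_T:
  assumes T: "subordination (Clop X) (Clop X') T" and V: "V \<in> clopens X'"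
  shows "finite F \<Longrightarrow> F \<subseteq> {N \<in> clopens X. (N, V) \<in> T} \<Longrightarrow> (\<Union>F, V) \<in> T"
proof (induction rule: finite_induct)
  case empty
  have "({}, {}) \<in> T" using subD(2)[OF T] by simp
  then have "({}, V) \<in> T" using subD(6)[OF T, of "{}" V "{}" "{}"] V clopens_empty[of X] by simp
  then show ?case by simp
next
  case (insert x F)
  then have "(x, V) \<in> T" "(\<Union>F, V) \<in> T" by auto
  then have "(x \<union> \<Union>F, V) \<in> T" using subD(4)[OF T] by fastforce
  then show ?case by simp
qed

lemma meet_least:
  assumes X: "Stone_space X" and X': "Stone_space X'"
    and R1: "closedin (prod_topology X X') R1" and R2: "closedin (prod_topology X X') R2"
    and T: "subordination (Clop X) (Clop X') T"
    and T1: "S_of X X' R1 \<subseteq> T" and T2: "S_of X X' R2 \<subseteq> T"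
  shows "S_of X X' (R1 \<inter> R2) \<subseteq> T"
proof clarify
  fix U V assume UV: "(U, V) \<in> S_of X X' (R1 \<inter> R2)"
  then have U: "U \<in> clopens X" and V: "V \<in> clopens X'" and sub: "(R1 \<inter> R2) `` U \<subseteq> V"
    by (auto simp: S_of_def)
  have Xs: "compact_space X" "Hausdorff_space X" "zero_dim X" using Stone_D[OF X] by auto
  have Xs': "compact_space X'" "Hausdorff_space X'" "zero_dim X'" using Stone_D[OF X'] by auto
  have R1s: "R1 \<subseteq> topspace X \<times> topspace X'" using closedin_subset[OF R1] by simp
  have R2s: "R2 \<subseteq> topspace X \<times> topspace X'" using closedin_subset[OF R2] by simp
  have Vs: "V \<subseteq> topspace X'" using clopens_sub[OF V] .
  have loc: "\<exists>N. N \<in> clopens X \<and> x \<in> N \<and> (N, V) \<in> T" if x: "x \<in> U" for x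
  proof -
    have xX: "x \<in> topspace X" using x clopens_sub[OF U] by blast
    have sx: "closedin X {x}"
      using closedin_t1_singleton[OF Hausdorff_imp_t1_space[OF Xs(2)] xX] .
    have c1: "closedin X' (R1 `` {x})" using img_closed[OF Xs(1) Xs'(1) Xs'(2) R1 sx] .
    have c2: "closedin X' (R2 `` {x})" using img_closed[OF Xs(1) Xs'(1) Xs'(2) R2 sx] .
    define L where "L = R2 `` {x} \<inter> (topspace X' - V)"
    have "openin X' V" using clopensD[OF V] by blast
    then have "closedin X' (topspace X' - V)" by (rule closedin_diff[OF closedin_topspace])
    then have cL: "closedin X' L" unfolding L_def using c2 by (intro closedin_Int)
    have oL: "openin X' (topspace X' - L)" using cL by (simp add: closedin_def)
    have "R1 `` {x} \<subseteq> topspace X' - L"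
    proof
      fix y assume y: "y \<in> R1 `` {x}"
      then have "y \<in> topspace X'" using R1s by blast
      moreover have "y \<notin> L"
      proof
        assume "y \<in> L"
        then have "(x, y) \<in> R1 \<inter> R2" "y \<notin> V" using y unfolding L_def by auto
        then show False using sub x by blast
      qed
      ultimately show "y \<in> topspace X' - L" by blast
    qed
    then obtain C where C: "C \<in> clopens X'" "R1 `` {x} \<subseteq> C" "C \<subseteq> topspace X' - L"
      using clopen_between[OF Xs'(1) Xs'(3) c1 oL] by blast
    define V1 where "V1 = C \<union> V"
    define V2 where "V2 = (topspace X' - C) \<union> V"
    have V1c: "V1 \<in> clopens X'" unfolding V1_def using clopens_Un[OF C(1) V] .
    have V2c: "V2 \<in> clopens X'" unfolding V2_def using clopens_Un[OF clopens_Diff[OF C(1)] V] .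
    have V12: "V1 \<inter> V2 = V" unfolding V1_def V2_def by blast
    have sub1: "R1 `` {x} \<subseteq> V1" using C(2) unfolding V1_def by blast
    have sub2: "R2 `` {x} \<subseteq> V2"
    proof
      fix y assume y: "y \<in> R2 `` {x}"
      then have yX: "y \<in> topspace X'" using R2s by blast
      show "y \<in> V2"
      proof (cases "y \<in> V")
        case True then show ?thesis unfolding V2_def by blast
      next
        case False
        then have "y \<in> L" using y yX unfolding L_def by blast
        then have "y \<notin> C" using C(3) by blast
        then show ?thesis using yX unfolding V2_def by blast
      qed
    qed
    have V1o: "openin X' V1" using clopensD[OF V1c] by blast
    have V2o: "openin X' V2" using clopensD[OF V2c] by blast
    obtain W1 where W1: "W1 \<in> clopens X" "{x} \<subseteq> W1" "R1 `` W1 \<subseteq> V1"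
      using K1[OF Xs(1) Xs(3) Xs(2) Xs'(1) R1 sx V1o sub1] by blast
    obtain W2 where W2: "W2 \<in> clopens X" "{x} \<subseteq> W2" "R2 `` W2 \<subseteq> V2"
      using K1[OF Xs(1) Xs(3) Xs(2) Xs'(1) R2 sx V2o sub2] by blast
    define N where "N = W1 \<inter> W2"
    have Nc: "N \<in> clopens X" unfolding N_def using clopens_Int[OF W1(1) W2(1)] .
    have "(N, V1) \<in> S_of X X' R1" using Nc V1c W1(3) unfolding N_def S_of_def by blast
    then have 1: "(N, V1) \<in> T" using T1 by blast
    have "(N, V2) \<in> S_of X X' R2" using Nc V2c W2(3) unfolding N_def S_of_def by blast
    then have 2: "(N, V2) \<in> T" using T2 by blast
    have "(N, V1 \<inter> V2) \<in> T" using subD(5)[OF T 1 2] by simp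
    then have "(N, V) \<in> T" using V12 by simp
    moreover have "x \<in> N" using W1(2) W2(2) unfolding N_def by blast
    ultimately show ?thesis using Nc by blast
  qed
  let ?A = "{N \<in> clopens X. (N, V) \<in> T}"
  have cU: "compactin X U" using closedin_compact_space[OF Xs(1)] U by (simp add: clopens_def)
  have "U \<subseteq> \<Union>?A" using loc by blast
  moreover have "\<And>N. N \<in> ?A \<Longrightarrow> openin X N" by (simp add: clopens_def)
  ultimately obtain F where F: "finite F" "F \<subseteq> ?A" "U \<subseteq> \<Union>F"
    using compactinD[OF cU, of ?A] by blast
  have "(\<Union>F, V) \<in> T" using fin_T[OF T V F(1,2)] .
  moreover have "\<Union>F \<in> clopens X" using F(1,2) by (intro clopens_Union) auto
  ultimately show "(U, V) \<in> T"
    using subD(6)[OF T, of U V "\<Union>F" V] U V F(3) by simp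
qed

lemma C4:
  assumes XE: "S5_space X E" and XE': "S5_space X' E'"
    and R1: "stone_mor X E X' E' R1" and R2: "stone_mor X E X' E' R2"
  shows "sub_is_meet (Clop X) (S_of X X E) (Clop X') (S_of X' X' E')
            (S_of X X' R1) (S_of X X' R2) (S_of X X' (R1 \<inter> R2))"
proof -
  note D = S5_spaceD[OF XE] and D' = S5_spaceD[OF XE']
  note A1 = stone_morD[OF R1] and A2 = stone_morD[OF R2]
  have "stone_mor X E X' E' (R1 \<inter> R2)"
    unfolding stone_mor_def
  proof (intro conjI)
    show "R1 \<inter> R2 \<subseteq> topspace X \<times> topspace X'" using A1(1) by blast
    show "closedin (prod_topology X X') (R1 \<inter> R2)" using A1(2) A2(2) by (rule closedin_Int)
    show "E O (R1 \<inter> R2) = R1 \<inter> R2"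
    proof
      show "E O (R1 \<inter> R2) \<subseteq> R1 \<inter> R2" using A1(3) A2(3) by blast
      show "R1 \<inter> R2 \<subseteq> E O (R1 \<inter> R2)"
      proof clarify
        fix x y assume "(x, y) \<in> R1" "(x, y) \<in> R2"
        moreover have "(x, x) \<in> E" using D(4) A1(1) calculation by blast
        ultimately show "(x, y) \<in> E O (R1 \<inter> R2)" by blast
      qed
    qed
    show "(R1 \<inter> R2) O E' = R1 \<inter> R2"
    proof
      show "(R1 \<inter> R2) O E' \<subseteq> R1 \<inter> R2" using A1(4) A2(4) by blast
      show "R1 \<inter> R2 \<subseteq> (R1 \<inter> R2) O E'"
      proof clarify
        fix x y assume "(x, y) \<in> R1" "(x, y) \<in> R2"
        moreover have "(y, y) \<in> E'" using D'(4) A1(1) calculation by blast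
        ultimately show "(x, y) \<in> (R1 \<inter> R2) O E'" by blast
      qed
    qed
  qed
  then have M: "sub_mor (Clop X) (S_of X X E) (Clop X') (S_of X' X' E') (S_of X X' (R1 \<inter> R2))"
    using C2[OF XE XE'] by blast
  have s1: "S_of X X' R1 \<subseteq> S_of X X' (R1 \<inter> R2)" by (auto simp: S_of_def)
  have s2: "S_of X X' R2 \<subseteq> S_of X X' (R1 \<inter> R2)" by (auto simp: S_of_def)
  have least: "S_of X X' (R1 \<inter> R2) \<subseteq> T"
    if "sub_mor (Clop X) (S_of X X E) (Clop X') (S_of X' X' E') T" "S_of X X' R1 \<subseteq> T" "S_of X X' R2 \<subseteq> T" for T
    using meet_least[OF D(1) D'(1) A1(2) A2(2) _ that(2,3)] that(1) by (simp add: sub_mor_def)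
  show ?thesis unfolding sub_is_meet_def using M s1 s2 least by blast
qed

lemma C5:
  assumes R: "R \<subseteq> topspace X \<times> topspace X'"
  shows "S_of X' X (R\<inverse>) = sub_dagger (Clop X) (Clop X') (S_of X X' R)"
proof -
  have eq: "R\<inverse> `` b \<subseteq> a \<longleftrightarrow> R `` (topspace X - a) \<subseteq> topspace X' - b" for a b
  proof
    assume h: "R\<inverse> `` b \<subseteq> a"
    show "R `` (topspace X - a) \<subseteq> topspace X' - b"
    proof
      fix y assume "y \<in> R `` (topspace X - a)"
      then obtain x where x: "x \<in> topspace X - a" "(x, y) \<in> R" by blast
      have "y \<in> topspace X'" using x(2) R by blast
      moreover have "y \<notin> b" using h x by blast
      ultimately show "y \<in> topspace X' - b" by blast
    qed
  next
    assume h: "R `` (topspace X - a) \<subseteq> topspace X' - b"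
    show "R\<inverse> `` b \<subseteq> a"
    proof
      fix x assume "x \<in> R\<inverse> `` b"
      then obtain y where y: "y \<in> b" "(x, y) \<in> R" by blast
      have "x \<in> topspace X" using y(2) R by blast
      then show "x \<in> a" using h y by blast
    qed
  qed
  have mem: "(b, a) \<in> S_of X' X (R\<inverse>) \<longleftrightarrow> (b, a) \<in> sub_dagger (Clop X) (Clop X') (S_of X X' R)" for a b
  proof
    assume "(b, a) \<in> S_of X' X (R\<inverse>)"
    then have h: "b \<in> clopens X'" "a \<in> clopens X" "R\<inverse> `` b \<subseteq> a" by (simp_all add: S_of_def)
    then have "(topspace X - a, topspace X' - b) \<in> S_of X X' R"
      using eq clopens_Diff[OF h(1)] clopens_Diff[OF h(2)] by (simp add: S_of_def)
    then show "(b, a) \<in> sub_dagger (Clop X) (Clop X') (S_of X X' R)"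
      using h by (simp add: sub_dagger_def)
  next
    assume "(b, a) \<in> sub_dagger (Clop X) (Clop X') (S_of X X' R)"
    then have h: "a \<in> clopens X" "b \<in> clopens X'" "R `` (topspace X - a) \<subseteq> topspace X' - b"
      by (simp_all add: sub_dagger_def S_of_def)
    then show "(b, a) \<in> S_of X' X (R\<inverse>)" using eq by (simp add: S_of_def)
  qed
  show ?thesis
  proof (rule set_eqI)
    fix p
    show "p \<in> S_of X' X (R\<inverse>) \<longleftrightarrow> p \<in> sub_dagger (Clop X) (Clop X') (S_of X X' R)"
      using mem[of "fst p" "snd p"] by simp
  qed
qed


lemma S5_subalgD:
  assumes "S5_subalg B S"
  shows "is_balg B" "subordination B B S" "\<And>a b. (a, b) \<in> S \<Longrightarrow> ble B a b"
    "\<And>a b. (a, b) \<in> S \<Longrightarrow> (bneg B b, bneg B a) \<in> S"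
    "\<And>a b. (a, b) \<in> S \<Longrightarrow> \<exists>c. (a, c) \<in> S \<and> (c, b) \<in> S"
  using assms unfolding S5_subalg_def S5_subordination_def by blast+

lemma C6:
  assumes S: "S5_subalg B S"
  shows "S5_space (Ult B) (R_of B B S)"
proof -
  have B: "is_balg B" using S5_subalgD(1)[OF S] .
  interpret b1: ba B by (rule ba.intro[OF B])
  have Ss: "S \<subseteq> bcarrier B \<times> bcarrier B" using subD(1)[OF S5_subalgD(2)[OF S]] .
  show ?thesis
    unfolding S5_space_def
    using b1.ult_Stone R_sub[OF B B, of S] R_equiv[OF S] R_closed[OF B B Ss] b1.top_ult
    by simp
qed

lemma sub_morD:
  assumes "sub_mor B S B' S' T"
  shows "subordination B B' T" "S O T = T" "T O S' = T"
  using assms unfolding sub_mor_def by auto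

lemma C8:
  assumes S: "S5_subalg B S" and S': "S5_subalg B' S'" and S'': "S5_subalg B'' S''"
    and T: "sub_mor B S B' S' T" and T': "sub_mor B' S' B'' S'' T'"
  shows "R_of B B'' (T O T') = R_of B B' T O R_of B' B'' T'"
  using R_comp[OF S5_subalgD(1)[OF S] S5_subalgD(1)[OF S'] S5_subalgD(1)[OF S'']
      sub_morD(1)[OF T] sub_morD(1)[OF T']] .

lemma C7:
  assumes S: "S5_subalg B S" and S': "S5_subalg B' S'" and T: "sub_mor B S B' S' T"
  shows "stone_mor (Ult B) (R_of B B S) (Ult B') (R_of B' B' S') (R_of B B' T)"
proof -
  have B: "is_balg B" and B': "is_balg B'" using S5_subalgD(1) S S' by auto
  note TT = sub_morD[OF T]
  have "R_of B B S O R_of B B' T = R_of B B' (S O T)"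
    using R_comp[OF B B B' S5_subalgD(2)[OF S] TT(1)] by simp
  moreover have "R_of B B' T O R_of B' B' S' = R_of B B' (T O S')"
    using R_comp[OF B B' B' TT(1) S5_subalgD(2)[OF S']] by simp
  ultimately show ?thesis
    unfolding stone_mor_def using R_sub[OF B B'] R_closed[OF B B' subD(1)[OF TT(1)]] TT(2,3) by simp
qed

lemma S_pt: "S_of X X E `` {U \<in> clopens X. x \<in> U} = S_of X X E `` pt X x"
  by (simp add: pt_def)

lemma RS_pt:
  assumes X: "Stone_space X" and X': "Stone_space X'" and R: "closedin (prod_topology X X') R"
    and y: "y \<in> topspace X" and z: "z \<in> topspace X'"
  shows "(pt X y, pt X' z) \<in> R_of (Clop X) (Clop X') (S_of X X' R) \<longleftrightarrow> (y, z) \<in> R"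
  using KEY_R[OF X X' R y z] pt_ults[OF y] pt_ults[OF z] by (simp add: R_of_def)

definition pinv :: "'a topology \<Rightarrow> 'a set set \<Rightarrow> 'a" where
  "pinv X u = (SOME y. y \<in> topspace X \<and> u = pt X y)"

lemma pinv:
  assumes X: "compact_space X" and u: "u \<in> ults (Clop X)"
  shows "pinv X u \<in> topspace X" "u = pt X (pinv X u)"
proof -
  have "\<exists>y. y \<in> topspace X \<and> u = pt X y" using ults_Clop[OF X] u by blast
  then have "pinv X u \<in> topspace X \<and> u = pt X (pinv X u)"
    unfolding pinv_def by (rule someI_ex)
  then show "pinv X u \<in> topspace X" "u = pt X (pinv X u)" by auto
qed

lemma RS_mem:
  assumes X: "Stone_space X" and X': "Stone_space X'" and R: "closedin (prod_topology X X') R"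
  shows "(u, w) \<in> R_of (Clop X) (Clop X') (S_of X X' R) \<longleftrightarrow>
      u \<in> ults (Clop X) \<and> w \<in> ults (Clop X') \<and> (pinv X u, pinv X' w) \<in> R"
proof (cases "u \<in> ults (Clop X) \<and> w \<in> ults (Clop X')")
  case True
  have cX: "compact_space X" "compact_space X'" using Stone_D X X' by auto
  obtain y z where yz: "y = pinv X u" "z = pinv X' w" by blast
  have y: "y \<in> topspace X" "u = pt X y" unfolding yz using pinv[OF cX(1)] True by blast+
  have z: "z \<in> topspace X'" "w = pt X' z" unfolding yz using pinv[OF cX(2)] True by blast+
  have "(u, w) \<in> R_of (Clop X) (Clop X') (S_of X X' R) \<longleftrightarrow> (y, z) \<in> R"
    using RS_pt[OF X X' R y(1) z(1)] y(2) z(2) by simp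
  then show ?thesis using True yz by simp
next
  case False
  then show ?thesis by (auto simp: R_of_def)
qed

lemma eta_pt:
  assumes XE: "S5_space X E" and x: "x \<in> topspace X" and y: "y \<in> topspace X"
  shows "(x, pt X y) \<in> eta_iso X E \<longleftrightarrow> (x, y) \<in> E"
  using KEY_R[OF S5_spaceD(1)[OF XE] S5_spaceD(1)[OF XE] S5_spaceD(3)[OF XE] x y] pt_ults[OF y] x
  by (simp add: eta_iso_def S_pt)

lemma eta_mem:
  assumes XE: "S5_space X E"
  shows "(x, u) \<in> eta_iso X E \<longleftrightarrow> x \<in> topspace X \<and> u \<in> ults (Clop X) \<and> (x, pinv X u) \<in> E"
proof (cases "x \<in> topspace X \<and> u \<in> ults (Clop X)")
  case True
  have cX: "compact_space X" using Stone_D S5_spaceD(1)[OF XE] by auto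
  obtain y where yd: "y = pinv X u" by blast
  have y: "y \<in> topspace X" "u = pt X y" unfolding yd using pinv[OF cX] True by blast+
  have "(x, u) \<in> eta_iso X E \<longleftrightarrow> (x, y) \<in> E" using eta_pt[OF XE _ y(1), of x] True y(2) by simp
  then show ?thesis using True yd by simp
next
  case False
  then show ?thesis by (auto simp: eta_iso_def)
qed


locale s5sp =
  fixes X :: "'a topology" and E
  assumes XE: "S5_space X E"
begin

abbreviation "\<eta> \<equiv> eta_iso X E"
abbreviation "\<rho> \<equiv> R_of (Clop X) (Clop X) (S_of X X E)"
abbreviation "\<pi> \<equiv> pinv X"
abbreviation "UU \<equiv> ults (Clop X)"

lemma St: "Stone_space X" using S5_spaceD(1)[OF XE] .
lemma cX: "compact_space X" using Stone_D[OF St] by blast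
lemma Es: "E \<subseteq> topspace X \<times> topspace X" using S5_spaceD(2)[OF XE] .
lemma Ecl: "closedin (prod_topology X X) E" using S5_spaceD(3)[OF XE] .
lemma Er: "x \<in> topspace X \<Longrightarrow> (x, x) \<in> E" using S5_spaceD(4)[OF XE] .
lemma Esy: "(x, y) \<in> E \<Longrightarrow> (y, x) \<in> E" using S5_spaceD(5)[OF XE] .
lemma Etr: "(x, y) \<in> E \<Longrightarrow> (y, z) \<in> E \<Longrightarrow> (x, z) \<in> E" using S5_spaceD(6)[OF XE] .

lemma em: "(x, u) \<in> \<eta> \<longleftrightarrow> x \<in> topspace X \<and> u \<in> UU \<and> (x, \<pi> u) \<in> E"
  using eta_mem[OF XE] .
lemma rm: "(u, w) \<in> \<rho> \<longleftrightarrow> u \<in> UU \<and> w \<in> UU \<and> (\<pi> u, \<pi> w) \<in> E"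
  using RS_mem[OF St St Ecl] .
lemma pi_in: "u \<in> UU \<Longrightarrow> \<pi> u \<in> topspace X" using pinv(1)[OF cX] .
lemma pt_in: "x \<in> topspace X \<Longrightarrow> pt X x \<in> UU" using pt_ults .
lemma pi_pt: "x \<in> topspace X \<Longrightarrow> (x, \<pi> (pt X x)) \<in> E"
  using eta_pt[OF XE, of x x] em[of x "pt X x"] Er[of x] pt_in[of x] by simp

lemma topY: "topspace (Ult (Clop X)) = UU"
  using ba.top_ult[OF ba.intro[OF Clop_balg]] .

lemma eta_alt:
  "\<eta> = {(p, q). p \<in> topspace X \<and> q \<in> topspace (Ult (Clop X)) \<and>
      (\<forall>(U, V)\<in>S_of X X E. p \<in> U \<longrightarrow> q \<in> stone_map (Clop X) V)}"
proof -
  have mem: "(p, q) \<in> \<eta> \<longleftrightarrow> p \<in> topspace X \<and> q \<in> UU \<and>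
      (\<forall>(U, V)\<in>S_of X X E. p \<in> U \<longrightarrow> q \<in> stone_map (Clop X) V)" for p q
  proof (cases "p \<in> topspace X \<and> q \<in> UU")
    case True
    have "S_of X X E `` {U \<in> clopens X. p \<in> U} \<subseteq> q \<longleftrightarrow>
        (\<forall>(U, V)\<in>S_of X X E. p \<in> U \<longrightarrow> q \<in> stone_map (Clop X) V)"
      using True by (auto simp: S_of_def stone_map_def)
    then show ?thesis using True by (simp add: eta_iso_def)
  next
    case False
    then show ?thesis by (auto simp: eta_iso_def)
  qed
  show ?thesis unfolding topY
    by (intro set_eqI, case_tac x) (simp only: mem prod.case mem_Collect_eq)
qed

lemma eta_closed: "closedin (prod_topology X (Ult (Clop X))) \<eta>"
  unfolding eta_alt
proof (rule closed_gen)
  fix a b assume "(a, b) \<in> S_of X X E"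
  then have "a \<in> clopens X" "b \<in> clopens X" by (auto simp: S_of_def)
  then show "openin X a" "closedin (Ult (Clop X)) (stone_map (Clop X) b)"
    using clopensD ba.sm_closed[OF ba.intro[OF Clop_balg], of b] by auto
qed

lemma etainv_closed: "closedin (prod_topology (Ult (Clop X)) X) (\<eta>\<inverse>)"
proof -
  have "\<eta>\<inverse> = {(q, p). q \<in> topspace (Ult (Clop X)) \<and> p \<in> topspace X \<and>
      (\<forall>(U, V)\<in>S_of X X E. p \<in> U \<longrightarrow> q \<in> stone_map (Clop X) V)}"
    by (subst eta_alt) auto
  moreover have "closedin (prod_topology (Ult (Clop X)) X) {(q, p). q \<in> topspace (Ult (Clop X)) \<and> p \<in> topspace X \<and>
      (\<forall>(U, V)\<in>S_of X X E. p \<in> U \<longrightarrow> q \<in> stone_map (Clop X) V)}"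
  proof (rule closed_gen2)
    fix a b assume "(a, b) \<in> S_of X X E"
    then have "a \<in> clopens X" "b \<in> clopens X" by (auto simp: S_of_def)
    then show "openin X a" "closedin (Ult (Clop X)) (stone_map (Clop X) b)"
      using clopensD ba.sm_closed[OF ba.intro[OF Clop_balg], of b] by auto
  qed
  ultimately show ?thesis by simp
qed

lemma id_a: "E O \<eta> = \<eta>"
proof (intro set_eqI iffI)
  fix p assume "p \<in> E O \<eta>"
  then obtain x y u where p: "p = (x, u)" "(x, y) \<in> E" "(y, u) \<in> \<eta>" by blast
  then show "p \<in> \<eta>" using Es Etr[of x y "\<pi> u"] by (auto simp: em)
next
  fix p assume "p \<in> \<eta>"
  then obtain x u where p: "p = (x, u)" "(x, u) \<in> \<eta>" by (cases p) auto
  then have "(x, x) \<in> E" using Er by (auto simp: em)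
  then show "p \<in> E O \<eta>" using p by blast
qed

lemma id_b: "\<eta> O \<rho> = \<eta>"
proof (intro set_eqI iffI)
  fix p assume "p \<in> \<eta> O \<rho>"
  then obtain x w u where p: "p = (x, u)" "(x, w) \<in> \<eta>" "(w, u) \<in> \<rho>" by blast
  then show "p \<in> \<eta>" using Etr[of x "\<pi> w" "\<pi> u"] by (auto simp: em rm)
next
  fix p assume "p \<in> \<eta>"
  then obtain x u where p: "p = (x, u)" "(x, u) \<in> \<eta>" by (cases p) auto
  then have "(u, u) \<in> \<rho>" using Er pi_in by (auto simp: em rm)
  then show "p \<in> \<eta> O \<rho>" using p by blast
qed

lemma id_c: "\<rho> O \<eta>\<inverse> = \<eta>\<inverse>"
proof (intro set_eqI iffI)
  fix p assume "p \<in> \<rho> O \<eta>\<inverse>"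
  then obtain x w u where p: "p = (u, x)" "(u, w) \<in> \<rho>" "(x, w) \<in> \<eta>" by blast
  then have "(x, \<pi> u) \<in> E" using Etr[of x "\<pi> w" "\<pi> u"] Esy[of "\<pi> u" "\<pi> w"] by (auto simp: em rm)
  then show "p \<in> \<eta>\<inverse>" using p by (auto simp: em rm)
next
  fix p assume "p \<in> \<eta>\<inverse>"
  then obtain x u where p: "p = (u, x)" "(x, u) \<in> \<eta>" by (cases p) auto
  then have "(u, u) \<in> \<rho>" using Er pi_in by (auto simp: em rm)
  then show "p \<in> \<rho> O \<eta>\<inverse>" using p by blast
qed

lemma id_d: "\<eta>\<inverse> O E = \<eta>\<inverse>"
proof (intro set_eqI iffI)
  fix p assume "p \<in> \<eta>\<inverse> O E"
  then obtain x y u where p: "p = (u, x)" "(y, u) \<in> \<eta>" "(y, x) \<in> E" by blast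
  then have "(x, \<pi> u) \<in> E" using Etr[of x y "\<pi> u"] Esy[of y x] by (auto simp: em)
  then show "p \<in> \<eta>\<inverse>" using p Es by (auto simp: em)
next
  fix p assume "p \<in> \<eta>\<inverse>"
  then obtain x u where p: "p = (u, x)" "(x, u) \<in> \<eta>" by (cases p) auto
  then have "(x, x) \<in> E" using Er by (auto simp: em)
  then show "p \<in> \<eta>\<inverse> O E" using p by blast
qed

lemma id_e: "\<eta> O \<eta>\<inverse> = E"
proof (intro set_eqI iffI)
  fix p assume "p \<in> \<eta> O \<eta>\<inverse>"
  then obtain x x' u where p: "p = (x, x')" "(x, u) \<in> \<eta>" "(x', u) \<in> \<eta>" by blast
  then show "p \<in> E" using Etr[of x "\<pi> u" x'] Esy[of x' "\<pi> u"] by (auto simp: em)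
next
  fix p assume "p \<in> E"
  then obtain x x' where p: "p = (x, x')" "(x, x') \<in> E" by (cases p) auto
  then have x: "x \<in> topspace X" "x' \<in> topspace X" using Es by auto
  have "(x, pt X x') \<in> \<eta>" using eta_pt[OF XE x] p by simp
  moreover have "(x', pt X x') \<in> \<eta>" using eta_pt[OF XE x(2) x(2)] Er[OF x(2)] by simp
  ultimately show "p \<in> \<eta> O \<eta>\<inverse>" using p by blast
qed

lemma id_f: "\<eta>\<inverse> O \<eta> = \<rho>"
proof (intro set_eqI iffI)
  fix p assume "p \<in> \<eta>\<inverse> O \<eta>"
  then obtain x u w where p: "p = (u, w)" "(x, u) \<in> \<eta>" "(x, w) \<in> \<eta>" by blast
  then show "p \<in> \<rho>" using Etr[of "\<pi> u" x "\<pi> w"] Esy[of x "\<pi> u"] by (auto simp: em rm)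
next
  fix p assume "p \<in> \<rho>"
  then obtain u w where p: "p = (u, w)" "(u, w) \<in> \<rho>" by (cases p) auto
  then have "(\<pi> u, u) \<in> \<eta>" "(\<pi> u, w) \<in> \<eta>" using Er pi_in by (auto simp: em rm)
  then show "p \<in> \<eta>\<inverse> O \<eta>" using p by blast
qed

lemma C9: "stone_iso X E (Ult (Clop X)) \<rho> \<eta>"
proof -
  have s1: "\<eta> \<subseteq> topspace X \<times> topspace (Ult (Clop X))" unfolding topY by (auto simp: em)
  have s2: "\<eta>\<inverse> \<subseteq> topspace (Ult (Clop X)) \<times> topspace X" using s1 by blast
  show ?thesis
    unfolding stone_iso_def stone_mor_def
    using s1 s2 eta_closed etainv_closed id_a id_b id_c id_d id_e id_f by blast
qed

end


lemma C10:
  assumes XE: "S5_space X E" and XE': "S5_space X' E'" and R: "stone_mor X E X' E' R"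
  shows "eta_iso X E O R_of (Clop X) (Clop X') (S_of X X' R) = R O eta_iso X' E'"
proof -
  interpret a: s5sp X E by (rule s5sp.intro[OF XE])
  interpret b: s5sp X' E' by (rule s5sp.intro[OF XE'])
  note RR = stone_morD[OF R]
  have rm: "(u, w) \<in> R_of (Clop X) (Clop X') (S_of X X' R) \<longleftrightarrow>
      u \<in> a.UU \<and> w \<in> b.UU \<and> (a.\<pi> u, b.\<pi> w) \<in> R" for u w
    using RS_mem[OF a.St b.St RR(2)] .
  have L: "(x, w) \<in> eta_iso X E O R_of (Clop X) (Clop X') (S_of X X' R) \<longleftrightarrow>
      x \<in> topspace X \<and> w \<in> b.UU \<and> (x, b.\<pi> w) \<in> R" for x w
  proof
    assume "(x, w) \<in> eta_iso X E O R_of (Clop X) (Clop X') (S_of X X' R)"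
    then obtain u where u: "(x, u) \<in> a.\<eta>" "(u, w) \<in> R_of (Clop X) (Clop X') (S_of X X' R)" by blast
    then have "(x, a.\<pi> u) \<in> E" "(a.\<pi> u, b.\<pi> w) \<in> R" "x \<in> topspace X" "w \<in> b.UU"
      by (auto simp: a.em rm)
    then have "(x, b.\<pi> w) \<in> E O R" by blast
    then show "x \<in> topspace X \<and> w \<in> b.UU \<and> (x, b.\<pi> w) \<in> R" using RR(3) \<open>x \<in> topspace X\<close> \<open>w \<in> b.UU\<close> by simp
  next
    assume h: "x \<in> topspace X \<and> w \<in> b.UU \<and> (x, b.\<pi> w) \<in> R"
    have e1: "(x, pt X x) \<in> a.\<eta>" using eta_pt[OF XE, of x x] a.Er h by simp
    have "(a.\<pi> (pt X x), x) \<in> E" using a.Esy a.pi_pt h by blast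
    then have "(a.\<pi> (pt X x), b.\<pi> w) \<in> E O R" using h by blast
    then have "(pt X x, w) \<in> R_of (Clop X) (Clop X') (S_of X X' R)"
      using RR(3) rm a.pt_in h by simp
    then show "(x, w) \<in> eta_iso X E O R_of (Clop X) (Clop X') (S_of X X' R)" using e1 by blast
  qed
  have Rr: "(x, w) \<in> R O eta_iso X' E' \<longleftrightarrow> x \<in> topspace X \<and> w \<in> b.UU \<and> (x, b.\<pi> w) \<in> R" for x w
  proof
    assume "(x, w) \<in> R O eta_iso X' E'"
    then obtain y where y: "(x, y) \<in> R" "(y, w) \<in> b.\<eta>" by blast
    then have "(y, b.\<pi> w) \<in> E'" "w \<in> b.UU" by (auto simp: b.em)
    then have "(x, b.\<pi> w) \<in> R O E'" using y by blast
    then show "x \<in> topspace X \<and> w \<in> b.UU \<and> (x, b.\<pi> w) \<in> R"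
      using RR(4) RR(1) y(1) \<open>w \<in> b.UU\<close> by auto
  next
    assume h: "x \<in> topspace X \<and> w \<in> b.UU \<and> (x, b.\<pi> w) \<in> R"
    have "(b.\<pi> w, w) \<in> b.\<eta>" using b.Er b.pi_in h by (simp add: b.em)
    then show "(x, w) \<in> R O eta_iso X' E'" using h by blast
  qed
  show ?thesis
  proof (rule set_eqI)
    fix p show "p \<in> eta_iso X E O R_of (Clop X) (Clop X') (S_of X X' R) \<longleftrightarrow> p \<in> R O eta_iso X' E'"
      using L[of "fst p" "snd p"] Rr[of "fst p" "snd p"] by simp
  qed
qed


context ba
begin

definition kap :: "'b set set \<Rightarrow> 'b" where
  "kap U = (SOME c. c \<in> car \<and> U = sm c)"

lemma kap:
  assumes "U \<in> clopens (Ult B)" shows "kap U \<in> car" "U = sm (kap U)"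
proof -
  have "\<exists>c. c \<in> car \<and> U = sm c" using clopen_char[OF assms] by blast
  then have "kap U \<in> car \<and> U = sm (kap U)" unfolding kap_def by (rule someI_ex)
  then show "kap U \<in> car" "U = sm (kap U)" by auto
qed

lemma kap_sm: assumes a: "a \<in> car" shows "kap (sm a) = a"
proof -
  have "kap (sm a) \<in> car" "sm a = sm (kap (sm a))" using kap[OF sm_clopen[OF a]] by auto
  then show ?thesis using sm_inj[OF a] by metis
qed

lemma kap_le:
  assumes "U \<in> clopens (Ult B)" "V \<in> clopens (Ult B)"
  shows "U \<subseteq> V \<longleftrightarrow> le (kap U) (kap V)"
proof -
  have "U \<subseteq> V \<longleftrightarrow> sm (kap U) \<subseteq> sm (kap V)" using kap assms by metis
  then show ?thesis using sm_le kap(1) assms by metis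
qed

end

lemma sigT_mem:
  assumes B: "is_balg B" and B': "is_balg B'" and T: "subordination B B' T"
  shows "(U, W) \<in> S_of (Ult B) (Ult B') (R_of B B' T) \<longleftrightarrow>
    U \<in> clopens (Ult B) \<and> W \<in> clopens (Ult B') \<and> (ba.kap B U, ba.kap B' W) \<in> T"
proof (cases "U \<in> clopens (Ult B) \<and> W \<in> clopens (Ult B')")
  case True
  interpret b1: ba B by (rule ba.intro[OF B])
  interpret b2: ba B' by (rule ba.intro[OF B'])
  have k: "b1.kap U \<in> bcarrier B" "U = stone_map B (b1.kap U)" "b2.kap W \<in> bcarrier B'" "W = stone_map B' (b2.kap W)"
    using b1.kap b2.kap True by auto
  obtain c d where cd: "c = b1.kap U" "d = b2.kap W" by blast
  have "(U, W) \<in> S_of (Ult B) (Ult B') (R_of B B' T) \<longleftrightarrow> (c, d) \<in> T"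
    using KEY_T[OF B B' T, of c d] k cd by simp
  then show ?thesis using True cd by simp
next
  case False
  then show ?thesis by (auto simp: S_of_def)
qed

locale s5al =
  fixes B :: "'b balg" and S
  assumes SS: "S5_subalg B S"
begin

lemma B: "is_balg B" using S5_subalgD(1)[OF SS] .
sublocale ba B by (rule ba.intro[OF B])

abbreviation "\<epsilon> \<equiv> eps_iso B S"
abbreviation "\<sigma> \<equiv> S_of (Ult B) (Ult B) (R_of B B S)"
abbreviation "CL \<equiv> clopens (Ult B)"

lemma Ssub: "subordination B B S" using S5_subalgD(2)[OF SS] .
lemma Sc: "(a, b) \<in> S \<Longrightarrow> a \<in> car \<and> b \<in> car" using subD(1)[OF Ssub] by blast
lemma Sle: "(a, b) \<in> S \<Longrightarrow> le a b" using S5_subalgD(3)[OF SS] .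
lemma Sint: "(a, b) \<in> S \<Longrightarrow> \<exists>c. (a, c) \<in> S \<and> (c, b) \<in> S" using S5_subalgD(5)[OF SS] .
lemma S4: "a \<in> car \<Longrightarrow> d \<in> car \<Longrightarrow> le a b \<Longrightarrow> (b, c) \<in> S \<Longrightarrow> le c d \<Longrightarrow> (a, d) \<in> S"
  using subD(6)[OF Ssub] .
lemma Str: "(a, b) \<in> S \<Longrightarrow> (b, c) \<in> S \<Longrightarrow> (a, c) \<in> S"
proof -
  assume ab: "(a, b) \<in> S" and bc: "(b, c) \<in> S"
  have "a \<in> car" "c \<in> car" using Sc ab bc by auto
  then show ?thesis using S4[of a c b c] Sle[OF ab] bc le_refl[of c] by simp
qed
lemma S_iff: "(a, c) \<in> S \<longleftrightarrow> (\<exists>b. (a, b) \<in> S \<and> (b, c) \<in> S)"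
  using Str Sint by blast

lemma sig_mem: "(U, W) \<in> \<sigma> \<longleftrightarrow> U \<in> CL \<and> W \<in> CL \<and> (kap U, kap W) \<in> S"
  using sigT_mem[OF B B Ssub] .

lemma eps_mem: "(a, U) \<in> \<epsilon> \<longleftrightarrow> a \<in> car \<and> U \<in> CL \<and> (a, kap U) \<in> S"
proof
  assume "(a, U) \<in> \<epsilon>"
  then obtain b where h: "a \<in> car" "U \<in> CL" "(a, b) \<in> S" "sm b \<subseteq> U" by (auto simp: eps_iso_def)
  have bc: "b \<in> car" using Sc h(3) by blast
  have "le b (kap U)" using kap_le[OF sm_clopen[OF bc] h(2)] h(4) kap_sm[OF bc] by simp
  then have "(a, kap U) \<in> S" using S4[OF h(1) kap(1)[OF h(2)] le_refl[OF h(1)] h(3)] by simp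
  then show "a \<in> car \<and> U \<in> CL \<and> (a, kap U) \<in> S" using h by simp
next
  assume h: "a \<in> car \<and> U \<in> CL \<and> (a, kap U) \<in> S"
  then show "(a, U) \<in> \<epsilon>" using kap(2)[of U] unfolding eps_iso_def by blast
qed

lemma ex_CL: "(\<exists>U. U \<in> CL \<and> P (kap U) U) \<longleftrightarrow> (\<exists>b\<in>car. P b (sm b))"
proof
  assume "\<exists>U. U \<in> CL \<and> P (kap U) U"
  then obtain U where "U \<in> CL" "P (kap U) U" by blast
  then show "\<exists>b\<in>car. P b (sm b)" using kap[of U] by metis
next
  assume "\<exists>b\<in>car. P b (sm b)"
  then obtain b where "b \<in> car" "P b (sm b)" by blast
  then show "\<exists>U. U \<in> CL \<and> P (kap U) U" using sm_clopen kap_sm by metis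
qed

definition Qe :: "('b set set \<times> 'b) set" where
  "Qe = {(U, c). U \<in> CL \<and> (kap U, c) \<in> S}"

lemma Qe_mem: "(U, c) \<in> Qe \<longleftrightarrow> U \<in> CL \<and> (kap U, c) \<in> S" by (simp add: Qe_def)

lemma CLtop: "topspace (Ult B) = sm tt" using top_ult sm_o by simp

lemma kap_z: "kap {} = z" using kap_sm[OF z_in] sm_z by simp
lemma kap_o: "kap (topspace (Ult B)) = tt" using kap_sm[OF o_in] CLtop by simp
lemma kap_un: "U \<in> CL \<Longrightarrow> V \<in> CL \<Longrightarrow> kap (U \<union> V) = j (kap U) (kap V)"
  using kap_sm[OF j_in[OF kap(1) kap(1)]] sm_join[OF kap(1) kap(1)] kap(2) by metis
lemma kap_int: "U \<in> CL \<Longrightarrow> V \<in> CL \<Longrightarrow> kap (U \<inter> V) = m (kap U) (kap V)"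
  using kap_sm[OF m_in[OF kap(1) kap(1)]] sm_meet[OF kap(1) kap(1)] kap(2) by metis

lemma eps_sub: "subordination B (Clop (Ult B)) \<epsilon>"
  unfolding subordination_def Clop_simps ble_Clop
proof (intro conjI allI impI)
  show "\<epsilon> \<subseteq> car \<times> CL" by (auto simp: eps_mem)
  show "(z, {}) \<in> \<epsilon>" using subD(2)[OF Ssub] kap_z clopens_empty by (simp add: eps_mem)
  show "(tt, topspace (Ult B)) \<in> \<epsilon>" using subD(3)[OF Ssub] kap_o clopens_top by (simp add: eps_mem)
next
  fix a b c assume "(a, c) \<in> \<epsilon> \<and> (b, c) \<in> \<epsilon>"
  then show "(j a b, c) \<in> \<epsilon>" using subD(4)[OF Ssub] by (simp add: eps_mem)
next
  fix a c d assume h: "(a, c) \<in> \<epsilon> \<and> (a, d) \<in> \<epsilon>"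
  then have "c \<in> CL" "d \<in> CL" by (auto simp: eps_mem)
  then show "(a, c \<inter> d) \<in> \<epsilon>" using h subD(5)[OF Ssub] kap_int clopens_Int[of c _ d]
    by (simp add: eps_mem)
next
  fix a b c d assume h: "a \<in> car \<and> d \<in> CL \<and> le a b \<and> (b, c) \<in> \<epsilon> \<and> c \<subseteq> d"
  then have c: "c \<in> CL" "(b, kap c) \<in> S" by (auto simp: eps_mem)
  have "d \<in> CL" "c \<subseteq> d" using h by auto
  then have "le (kap c) (kap d)" using kap_le[OF c(1)] by blast
  then have "(a, kap d) \<in> S" using S4[of a "kap d" b "kap c"] h c kap(1) by simp
  then show "(a, d) \<in> \<epsilon>" using h by (simp add: eps_mem)
qed

lemma Qe_sub: "subordination (Clop (Ult B)) B Qe"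
  unfolding subordination_def Clop_simps ble_Clop
proof (intro conjI allI impI)
  show "Qe \<subseteq> CL \<times> car" using Sc by (auto simp: Qe_mem)
  show "({}, z) \<in> Qe" using subD(2)[OF Ssub] kap_z clopens_empty by (simp add: Qe_mem)
  show "(topspace (Ult B), tt) \<in> Qe" using subD(3)[OF Ssub] kap_o clopens_top by (simp add: Qe_mem)
next
  fix a b c assume h: "(a, c) \<in> Qe \<and> (b, c) \<in> Qe"
  then have "a \<in> CL" "b \<in> CL" by (auto simp: Qe_mem)
  then show "(a \<union> b, c) \<in> Qe" using h subD(4)[OF Ssub] kap_un clopens_Un[of a _ b]
    by (simp add: Qe_mem)
next
  fix a c d assume "(a, c) \<in> Qe \<and> (a, d) \<in> Qe"
  then show "(a, m c d) \<in> Qe" using subD(5)[OF Ssub] by (simp add: Qe_mem)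
next
  fix a b c d assume h: "a \<in> CL \<and> d \<in> car \<and> a \<subseteq> b \<and> (b, c) \<in> Qe \<and> le c d"
  then have b: "b \<in> CL" "(kap b, c) \<in> S" by (auto simp: Qe_mem)
  have "a \<in> CL" "a \<subseteq> b" using h by auto
  then have "le (kap a) (kap b)" using kap_le[OF _ b(1), of a] by blast
  then have "(kap a, d) \<in> S" using S4[of "kap a" d "kap b" c] h b kap(1) by simp
  then show "(a, d) \<in> Qe" using h by (simp add: Qe_mem)
qed

lemma i1: "S O \<epsilon> = \<epsilon>"
proof (rule set_eqI)
  fix p
  show "p \<in> S O \<epsilon> \<longleftrightarrow> p \<in> \<epsilon>"
  proof (cases p)
    case (Pair a U)
    have "p \<in> S O \<epsilon> \<longleftrightarrow> (\<exists>b. (a, b) \<in> S \<and> b \<in> car \<and> U \<in> CL \<and> (b, kap U) \<in> S)"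
      unfolding Pair by (auto simp: eps_mem)
    also have "\<dots> \<longleftrightarrow> U \<in> CL \<and> (a, kap U) \<in> S" using S_iff Sc by blast
    also have "\<dots> \<longleftrightarrow> p \<in> \<epsilon>" unfolding Pair using Sc by (auto simp: eps_mem)
    finally show ?thesis .
  qed
qed

lemma i2: "\<epsilon> O \<sigma> = \<epsilon>"
proof (rule set_eqI)
  fix p
  show "p \<in> \<epsilon> O \<sigma> \<longleftrightarrow> p \<in> \<epsilon>"
  proof (cases p)
    case (Pair a U)
    have "p \<in> \<epsilon> O \<sigma> \<longleftrightarrow> (\<exists>V. V \<in> CL \<and> a \<in> car \<and> (a, kap V) \<in> S \<and> U \<in> CL \<and> (kap V, kap U) \<in> S)"
      unfolding Pair by (auto simp: eps_mem sig_mem)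
    also have "\<dots> \<longleftrightarrow> (\<exists>b\<in>car. a \<in> car \<and> (a, b) \<in> S \<and> U \<in> CL \<and> (b, kap U) \<in> S)"
      using ex_CL[of "\<lambda>b V. a \<in> car \<and> (a, b) \<in> S \<and> U \<in> CL \<and> (b, kap U) \<in> S"] by simp
    also have "\<dots> \<longleftrightarrow> a \<in> car \<and> U \<in> CL \<and> (a, kap U) \<in> S" using S_iff Sc by blast
    also have "\<dots> \<longleftrightarrow> p \<in> \<epsilon>" unfolding Pair by (simp add: eps_mem)
    finally show ?thesis .
  qed
qed

lemma i3: "\<sigma> O Qe = Qe"
proof (rule set_eqI)
  fix p
  show "p \<in> \<sigma> O Qe \<longleftrightarrow> p \<in> Qe"
  proof (cases p)
    case (Pair U c)
    have "p \<in> \<sigma> O Qe \<longleftrightarrow> (\<exists>V. V \<in> CL \<and> U \<in> CL \<and> (kap U, kap V) \<in> S \<and> (kap V, c) \<in> S)"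
      unfolding Pair by (auto simp: Qe_mem sig_mem)
    also have "\<dots> \<longleftrightarrow> (\<exists>b\<in>car. U \<in> CL \<and> (kap U, b) \<in> S \<and> (b, c) \<in> S)"
      using ex_CL[of "\<lambda>b V. U \<in> CL \<and> (kap U, b) \<in> S \<and> (b, c) \<in> S"] by simp
    also have "\<dots> \<longleftrightarrow> U \<in> CL \<and> (kap U, c) \<in> S" using S_iff Sc by blast
    also have "\<dots> \<longleftrightarrow> p \<in> Qe" unfolding Pair by (simp add: Qe_mem)
    finally show ?thesis .
  qed
qed

lemma i4: "Qe O S = Qe"
proof (rule set_eqI)
  fix p
  show "p \<in> Qe O S \<longleftrightarrow> p \<in> Qe"
  proof (cases p)
    case (Pair U c)
    have "p \<in> Qe O S \<longleftrightarrow> (\<exists>b. U \<in> CL \<and> (kap U, b) \<in> S \<and> (b, c) \<in> S)"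
      unfolding Pair by (auto simp: Qe_mem)
    also have "\<dots> \<longleftrightarrow> U \<in> CL \<and> (kap U, c) \<in> S" using S_iff by blast
    also have "\<dots> \<longleftrightarrow> p \<in> Qe" unfolding Pair by (simp add: Qe_mem)
    finally show ?thesis .
  qed
qed

lemma i5: "\<epsilon> O Qe = S"
proof (rule set_eqI)
  fix p
  show "p \<in> \<epsilon> O Qe \<longleftrightarrow> p \<in> S"
  proof (cases p)
    case (Pair a c)
    have "p \<in> \<epsilon> O Qe \<longleftrightarrow> (\<exists>V. V \<in> CL \<and> a \<in> car \<and> (a, kap V) \<in> S \<and> (kap V, c) \<in> S)"
      unfolding Pair by (auto simp: Qe_mem eps_mem)
    also have "\<dots> \<longleftrightarrow> (\<exists>b\<in>car. a \<in> car \<and> (a, b) \<in> S \<and> (b, c) \<in> S)"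
      using ex_CL[of "\<lambda>b V. a \<in> car \<and> (a, b) \<in> S \<and> (b, c) \<in> S"] by simp
    also have "\<dots> \<longleftrightarrow> (a, c) \<in> S" using S_iff Sc by blast
    finally show ?thesis unfolding Pair .
  qed
qed

lemma i6: "Qe O \<epsilon> = \<sigma>"
proof (rule set_eqI)
  fix p
  show "p \<in> Qe O \<epsilon> \<longleftrightarrow> p \<in> \<sigma>"
  proof (cases p)
    case (Pair U W)
    have "p \<in> Qe O \<epsilon> \<longleftrightarrow> (\<exists>b. U \<in> CL \<and> (kap U, b) \<in> S \<and> b \<in> car \<and> W \<in> CL \<and> (b, kap W) \<in> S)"
      unfolding Pair by (auto simp: Qe_mem eps_mem)
    also have "\<dots> \<longleftrightarrow> U \<in> CL \<and> W \<in> CL \<and> (kap U, kap W) \<in> S" using S_iff Sc by blast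
    also have "\<dots> \<longleftrightarrow> p \<in> \<sigma>" unfolding Pair by (simp add: sig_mem)
    finally show ?thesis .
  qed
qed

lemma C11: "sub_iso B S (Clop (Ult B)) \<sigma> \<epsilon>"
  unfolding sub_iso_def sub_mor_def
  using eps_sub Qe_sub i1 i2 i3 i4 i5 i6 by blast

end

lemma C12:
  assumes S: "S5_subalg B S" and S': "S5_subalg B' S'" and T: "sub_mor B S B' S' T"
  shows "eps_iso B S O S_of (Ult B) (Ult B') (R_of B B' T) = T O eps_iso B' S'"
proof -
  interpret a: s5al B S by (rule s5al.intro[OF S])
  interpret b: s5al B' S' by (rule s5al.intro[OF S'])
  note TT = sub_morD[OF T]
  have Tc: "\<And>a c. (a, c) \<in> T \<Longrightarrow> a \<in> a.car \<and> c \<in> b.car" using subD(1)[OF TT(1)] by blast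
  have sm: "(U, W) \<in> S_of (Ult B) (Ult B') (R_of B B' T) \<longleftrightarrow> U \<in> a.CL \<and> W \<in> b.CL \<and> (a.kap U, b.kap W) \<in> T" for U W
    using sigT_mem[OF a.B b.B TT(1)] .
  show ?thesis
  proof (rule set_eqI)
    fix p
    show "p \<in> eps_iso B S O S_of (Ult B) (Ult B') (R_of B B' T) \<longleftrightarrow> p \<in> T O eps_iso B' S'"
    proof (cases p)
      case (Pair x W)
      have "p \<in> eps_iso B S O S_of (Ult B) (Ult B') (R_of B B' T) \<longleftrightarrow>
          (\<exists>V. V \<in> a.CL \<and> x \<in> a.car \<and> (x, a.kap V) \<in> S \<and> W \<in> b.CL \<and> (a.kap V, b.kap W) \<in> T)"
        unfolding Pair by (auto simp: a.eps_mem sm)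
      also have "\<dots> \<longleftrightarrow> (\<exists>c\<in>a.car. x \<in> a.car \<and> (x, c) \<in> S \<and> W \<in> b.CL \<and> (c, b.kap W) \<in> T)"
        using a.ex_CL[of "\<lambda>c V. x \<in> a.car \<and> (x, c) \<in> S \<and> W \<in> b.CL \<and> (c, b.kap W) \<in> T"] by simp
      also have "\<dots> \<longleftrightarrow> x \<in> a.car \<and> W \<in> b.CL \<and> (x, b.kap W) \<in> S O T" using a.Sc by blast
      also have "\<dots> \<longleftrightarrow> x \<in> a.car \<and> W \<in> b.CL \<and> (x, b.kap W) \<in> T O S'" using TT(2,3) by simp
      also have "\<dots> \<longleftrightarrow> (\<exists>d. (x, d) \<in> T \<and> d \<in> b.car \<and> W \<in> b.CL \<and> (d, b.kap W) \<in> S')" using Tc by blast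
      also have "\<dots> \<longleftrightarrow> p \<in> T O eps_iso B' S'" unfolding Pair by (auto simp: b.eps_mem)
      finally show ?thesis .
    qed
  qed
qed

theorem theorem3p8:
  shows
  \<comment> \<open>F is well defined on objects\<close>
  "(\<forall>(X::'a topology) E. S5_space X E \<longrightarrow> S5_subalg (Clop X) (S_of X X E))
   \<comment> \<open>F is well defined on morphisms\<close>
 \<and> (\<forall>(X::'a topology) E (X'::'c topology) E' R.
      S5_space X E \<and> S5_space X' E' \<and> stone_mor X E X' E' R
      \<longrightarrow> sub_mor (Clop X) (S_of X X E) (Clop X') (S_of X' X' E') (S_of X X' R))
   \<comment> \<open>F preserves composition (identities are preserved by definition: F(E) = S_E)\<close>
 \<and> (\<forall>(X::'a topology) E (X'::'c topology) E' (X''::'e topology) E'' R R'.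
      S5_space X E \<and> S5_space X' E' \<and> S5_space X'' E'' \<and>
      stone_mor X E X' E' R \<and> stone_mor X' E' X'' E'' R'
      \<longrightarrow> S_of X X'' (R O R') = S_of X X' R O S_of X' X'' R')
   \<comment> \<open>F preserves binary meets of morphisms\<close>
 \<and> (\<forall>(X::'a topology) E (X'::'c topology) E' R1 R2.
      S5_space X E \<and> S5_space X' E' \<and> stone_mor X E X' E' R1 \<and> stone_mor X E X' E' R2
      \<longrightarrow> sub_is_meet (Clop X) (S_of X X E) (Clop X') (S_of X' X' E')
            (S_of X X' R1) (S_of X X' R2) (S_of X X' (R1 \<inter> R2)))
   \<comment> \<open>F commutes with daggers\<close>
 \<and> (\<forall>(X::'a topology) E (X'::'c topology) E' R.
      S5_space X E \<and> S5_space X' E' \<and> stone_mor X E X' E' R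
      \<longrightarrow> S_of X' X (R\<inverse>) = sub_dagger (Clop X) (Clop X') (S_of X X' R))
   \<comment> \<open>G is well defined on objects\<close>
 \<and> (\<forall>(B::'b balg) S. S5_subalg B S \<longrightarrow> S5_space (Ult B) (R_of B B S))
   \<comment> \<open>G is well defined on morphisms\<close>
 \<and> (\<forall>(B::'b balg) S (B'::'d balg) S' T.
      S5_subalg B S \<and> S5_subalg B' S' \<and> sub_mor B S B' S' T
      \<longrightarrow> stone_mor (Ult B) (R_of B B S) (Ult B') (R_of B' B' S') (R_of B B' T))
   \<comment> \<open>G preserves composition\<close>
 \<and> (\<forall>(B::'b balg) S (B'::'d balg) S' (B''::'f balg) S'' T T'.
      S5_subalg B S \<and> S5_subalg B' S' \<and> S5_subalg B'' S'' \<and>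
      sub_mor B S B' S' T \<and> sub_mor B' S' B'' S'' T'
      \<longrightarrow> R_of B B'' (T O T') = R_of B B' T O R_of B' B'' T')
   \<comment> \<open>natural isomorphism Id \<cong> G F\<close>
 \<and> (\<forall>(X::'a topology) E. S5_space X E \<longrightarrow>
      stone_iso X E (Ult (Clop X)) (R_of (Clop X) (Clop X) (S_of X X E)) (eta_iso X E))
 \<and> (\<forall>(X::'a topology) E (X'::'c topology) E' R.
      S5_space X E \<and> S5_space X' E' \<and> stone_mor X E X' E' R
      \<longrightarrow> eta_iso X E O R_of (Clop X) (Clop X') (S_of X X' R) = R O eta_iso X' E')
   \<comment> \<open>natural isomorphism Id \<cong> F G\<close>
 \<and> (\<forall>(B::'b balg) S. S5_subalg B S \<longrightarrow>
      sub_iso B S (Clop (Ult B)) (S_of (Ult B) (Ult B) (R_of B B S)) (eps_iso B S))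
 \<and> (\<forall>(B::'b balg) S (B'::'d balg) S' T.
      S5_subalg B S \<and> S5_subalg B' S' \<and> sub_mor B S B' S' T
      \<longrightarrow> eps_iso B S O S_of (Ult B) (Ult B') (R_of B B' T) = T O eps_iso B' S')"
  apply (intro conjI allI impI)
  subgoal by (rule C1)
  subgoal by (elim conjE) (rule C2)
  subgoal by (elim conjE) (rule C3)
  subgoal by (elim conjE) (rule C4)
  subgoal by (elim conjE) (rule C5[OF stone_morD(1)])
  subgoal by (rule C6)
  subgoal by (elim conjE) (rule C7)
  subgoal by (elim conjE) (rule C8)
  subgoal by (rule s5sp.C9[OF s5sp.intro])
  subgoal by (elim conjE) (rule C10)
  subgoal by (rule s5al.C11[OF s5al.intro])
  subgoal by (elim conjE) (rule C12)
  done

end
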